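(* Let $\Lambda$ be the groupoid of Markov shifts and $E$ the set of elementary conjugacies. Then the map $\mathcal N(\Lambda,E)\to\mathrm{SSE}(\{0,1\})$ sending $X_A\mapsto A$ and $\varphi\mapsto(R_\varphi,S_\varphi)$ (so that a simplex given by elementary conjugacies $\varphi_{i,j}:X_{B_i}\to X_{B_j}$ is sent to the simplex given by the pairs $(R_{\varphi_{i,j}},S_{\varphi_{i,j}})$) is an isomorphism of simplicial sets.
   Context: Non-degenerate: no zero rows or columns. For a non-degenerate $A\in\{0,1\}^{n\times n}$, $X_A=\{x\in\{1,\dots,n\}^{\mathbb Z}:A_{x_\ell,x_{\ell+1}}=1\ \forall\ell\}$ with the left shift. $\Lambda$ has as objects the shifts $X_A$ for non-degenerate square $\{0,1\}$-matrices $A$, and as morphisms shift-commuting homeomorphisms. A conjugacy $\varphi:X_A\to X_B$ is elementary if there are $\varphi_{\mathrm{loc}}$, $\varphi^{-1}_{\mathrm{loc}}$ (on allowed pairs) with $\varphi(x)_i=\varphi_{\mathrm{loc}}(x_i,x_{i+1})$ and $\varphi^{-1}(y)_i=\varphi^{-1}_{\mathrm{loc}}(y_{i-1},y_i)$. $(R_\varphi)_{a,b}=1$ iff $\varphi_{\mathrm{loc}}(a,a')=b$ for some allowed $a'$; $(S_\varphi)_{b,a}=1$ iff $\varphi^{-1}_{\mathrm{loc}}(b,b')=a$ for some allowed $b'$. The nerve $\mathcal N(\Lambda,E)$ is the simplicial set whose $n$-simplices are tuples of objects $(X_0,\dots,X_n)$ with morphisms $\varphi_{i,j}:X_i\to X_j$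 in $E$ ($i<j$) such that $\varphi_{j,k}\circ\varphi_{i,j}=\varphi_{i,k}$ for $i<j<k$. $\mathrm{SSE}(\{0,1\})$ has as $n$-simplices tuples $(B_0,\dots,B_n)$ of non-degenerate square $\{0,1\}$-matrices with non-degenerate $\{0,1\}$-matrices $R^{i,j},S^{i,j}$ ($i<j$), $B_i=R^{i,j}S^{i,j}$, $B_j=S^{i,j}R^{i,j}$, and for $i<j<k$: $R^{i,j}R^{j,k}=R^{i,k}$, $R^{j,k}S^{i,k}=S^{i,j}$, $S^{i,k}R^{i,j}=S^{j,k}$. Face maps in both delete a vertex. *)

theory Defs
  imports "HOL-Analysis.Analysis" "Jordan_Normal_Form.Matrix" "HOL-Library.FuncSet"
begin

text \<open>Conventions: matrices are natural-number matrices (Jordan_Normal_Form type nat mat);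
  the alphabet of an n x n matrix is 0..n-1 (0-based instead of 1..n);
  matrix products are the ordinary (integer) products.\<close>

definition zero_one_mat :: "nat mat \<Rightarrow> bool" where
  "zero_one_mat M \<longleftrightarrow> (\<forall>i<dim_row M. \<forall>j<dim_col M. M $$ (i,j) \<in> {0,1})"

definition nondeg_mat :: "nat mat \<Rightarrow> bool" where
  "nondeg_mat M \<longleftrightarrow> (\<forall>i<dim_row M. \<exists>j<dim_col M. M $$ (i,j) \<noteq> 0)
                  \<and> (\<forall>j<dim_col M. \<exists>i<dim_row M. M $$ (i,j) \<noteq> 0)"

definition obj_mat :: "nat mat \<Rightarrow> bool" where
  "obj_mat A \<longleftrightarrow> dim_col A = dim_row A \<and> 0 < dim_row A \<and> zero_one_mat A \<and> nondeg_mat A"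

definition shift_space :: "nat mat \<Rightarrow> (int \<Rightarrow> nat) set" where
  "shift_space A = {x. (\<forall>l. x l < dim_row A) \<and> (\<forall>l. A $$ (x l, x (l+1)) = 1)}"

definition left_shift :: "(int \<Rightarrow> nat) \<Rightarrow> (int \<Rightarrow> nat)" where
  "left_shift x = (\<lambda>i. x (i + 1))"

text \<open>Morphisms of Lambda from X_A to X_B: shift-commuting homeomorphisms, represented as
  functions that are extensional on X_A (i.e. undefined outside X_A).\<close>
definition conjugacy :: "nat mat \<Rightarrow> nat mat \<Rightarrow> ((int \<Rightarrow> nat) \<Rightarrow> (int \<Rightarrow> nat)) \<Rightarrow> bool" where
  "conjugacy A B \<phi> \<longleftrightarrow> \<phi> \<in> extensional (shift_space A)
     \<and> (\<exists>\<psi>. homeomorphism (shift_space A) (shift_space B) \<phi> \<psi>)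
     \<and> (\<forall>x\<in>shift_space A. \<phi> (left_shift x) = left_shift (\<phi> x))"

definition inv_conj :: "nat mat \<Rightarrow> ((int \<Rightarrow> nat) \<Rightarrow> (int \<Rightarrow> nat)) \<Rightarrow> (int \<Rightarrow> nat) \<Rightarrow> (int \<Rightarrow> nat)" where
  "inv_conj A \<phi> = inv_into (shift_space A) \<phi>"

definition elementary :: "nat mat \<Rightarrow> nat mat \<Rightarrow> ((int \<Rightarrow> nat) \<Rightarrow> (int \<Rightarrow> nat)) \<Rightarrow> bool" where
  "elementary A B \<phi> \<longleftrightarrow> conjugacy A B \<phi>
     \<and> (\<exists>f. \<forall>x\<in>shift_space A. \<forall>i. \<phi> x i = f (x i) (x (i+1)))
     \<and> (\<exists>g. \<forall>y\<in>shift_space B. \<forall>i. inv_conj A \<phi> y i = g (y (i-1)) (y i))"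

text \<open>The local rules phi_loc and (phi^-1)_loc (determined on allowed pairs).\<close>
definition loc_rule :: "nat mat \<Rightarrow> ((int \<Rightarrow> nat) \<Rightarrow> (int \<Rightarrow> nat)) \<Rightarrow> nat \<Rightarrow> nat \<Rightarrow> nat" where
  "loc_rule A \<phi> = (SOME f. \<forall>x\<in>shift_space A. \<forall>i. \<phi> x i = f (x i) (x (i+1)))"

definition inv_loc_rule :: "nat mat \<Rightarrow> nat mat \<Rightarrow> ((int \<Rightarrow> nat) \<Rightarrow> (int \<Rightarrow> nat)) \<Rightarrow> nat \<Rightarrow> nat \<Rightarrow> nat" where
  "inv_loc_rule A B \<phi> = (SOME g. \<forall>y\<in>shift_space B. \<forall>i. inv_conj A \<phi> y i = g (y (i-1)) (y i))"

definition R_of :: "nat mat \<Rightarrow> nat mat \<Rightarrow> ((int \<Rightarrow> nat) \<Rightarrow> (int \<Rightarrow> nat)) \<Rightarrow> nat mat" where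
  "R_of A B \<phi> = mat (dim_row A) (dim_row B)
     (\<lambda>(a,b). if \<exists>a'<dim_row A. A $$ (a,a') = 1 \<and> loc_rule A \<phi> a a' = b then 1 else 0)"

definition S_of :: "nat mat \<Rightarrow> nat mat \<Rightarrow> ((int \<Rightarrow> nat) \<Rightarrow> (int \<Rightarrow> nat)) \<Rightarrow> nat mat" where
  "S_of A B \<phi> = mat (dim_row B) (dim_row A)
     (\<lambda>(b,a). if \<exists>b'<dim_row B. B $$ (b,b') = 1 \<and> inv_loc_rule A B \<phi> b b' = a then 1 else 0)"

definition nerve_simplex :: "nat \<Rightarrow> nat mat list \<Rightarrow> (nat \<Rightarrow> nat \<Rightarrow> ((int \<Rightarrow> nat) \<Rightarrow> (int \<Rightarrow> nat))) \<Rightarrow> bool" where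
  "nerve_simplex n Bs \<Phi> \<longleftrightarrow> length Bs = Suc n \<and> (\<forall>i\<le>n. obj_mat (Bs ! i))
     \<and> (\<forall>i j. i < j \<and> j \<le> n \<longrightarrow> elementary (Bs ! i) (Bs ! j) (\<Phi> i j))
     \<and> (\<forall>i j k. i < j \<and> j < k \<and> k \<le> n \<longrightarrow>
           compose (shift_space (Bs ! i)) (\<Phi> j k) (\<Phi> i j) = \<Phi> i k)"

definition sse_simplex :: "nat \<Rightarrow> nat mat list \<Rightarrow> (nat \<Rightarrow> nat \<Rightarrow> nat mat) \<Rightarrow> (nat \<Rightarrow> nat \<Rightarrow> nat mat) \<Rightarrow> bool" where
  "sse_simplex n Bs R S \<longleftrightarrow> length Bs = Suc n \<and> (\<forall>i\<le>n. obj_mat (Bs ! i))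
     \<and> (\<forall>i j. i < j \<and> j \<le> n \<longrightarrow>
          R i j \<in> carrier_mat (dim_row (Bs ! i)) (dim_row (Bs ! j))
        \<and> S i j \<in> carrier_mat (dim_row (Bs ! j)) (dim_row (Bs ! i))
        \<and> zero_one_mat (R i j) \<and> zero_one_mat (S i j)
        \<and> nondeg_mat (R i j) \<and> nondeg_mat (S i j)
        \<and> Bs ! i = R i j * S i j \<and> Bs ! j = S i j * R i j)
     \<and> (\<forall>i j k. i < j \<and> j < k \<and> k \<le> n \<longrightarrow>
          R i j * R j k = R i k \<and> R j k * S i k = S i j \<and> S i k * R i j = S j k)"

end

theory Submission
  imports Defs
begin


lemma open_coord_eq: "open {x::int\<Rightarrow>nat. x l = a}"
proof -
  have "{x::int\<Rightarrow>nat. x l = a} = (\<lambda>x. x l) -` {a}" by auto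
  moreover have "open ((\<lambda>x::int\<Rightarrow>nat. x l) -` {a})"
    by (rule open_vimage) (auto intro: continuous_on_product_coordinates open_discrete)
  ultimately show ?thesis by simp
qed

lemma cont_block:
  fixes h :: "nat \<Rightarrow> nat \<Rightarrow> nat"
  shows "continuous_on S (\<lambda>x::int\<Rightarrow>nat. \<lambda>l. h (x (l + k)) (x (l + m)))"
proof (rule continuous_on_coordinatewise_then_product)
  fix l
  let ?F = "\<lambda>x::int\<Rightarrow>nat. h (x (l + k)) (x (l + m))"
  have "open (?F -` B)" for B :: "nat set"
  proof -
    have "?F -` B = (\<Union>(a,b)\<in>{(a,b). h a b \<in> B}. {x. x (l+k) = a} \<inter> {x. x (l+m) = b})"
      by auto
    moreover have "open (\<Union>(a,b)\<in>{(a,b). h a b \<in> B}. {x::int\<Rightarrow>nat. x (l+k) = a} \<inter> {x. x (l+m) = b})"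
      by (intro open_UN ballI) (auto intro!: open_Int open_coord_eq)
    ultimately show ?thesis by simp
  qed
  then show "continuous_on S ?F"
    unfolding continuous_on_open_invariant by blast
qed




definition splice :: "(int \<Rightarrow> nat) \<Rightarrow> (int \<Rightarrow> nat) \<Rightarrow> int \<Rightarrow> int \<Rightarrow> nat" where
  "splice x y i = (\<lambda>l. if l \<le> i then x l else y l)"

lemma splice_in:
  assumes "x \<in> shift_space A" "y \<in> shift_space A" "x i = y i"
  shows "splice x y i \<in> shift_space A"
  unfolding shift_space_def mem_Collect_eq
proof safe
  fix l
  show "splice x y i l < dim_row A" using assms by (auto simp: splice_def shift_space_def)
  show "A $$ (splice x y i l, splice x y i (l + 1)) = 1"
  proof (cases "l < i")
    case True then show ?thesis using assms(1) by (auto simp: splice_def shift_space_def)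
  next
    case False
    then have "splice x y i l = y l" using assms(3) by (auto simp: splice_def)
    moreover have "splice x y i (l+1) = y (l+1)" using False by (auto simp: splice_def)
    ultimately show ?thesis using assms(2) by (auto simp: shift_space_def)
  qed
qed

lemma splice_at: "splice x y i i = x i" "l \<le> i \<Longrightarrow> splice x y i l = x l"
  "i < l \<Longrightarrow> splice x y i l = y l"
  by (auto simp: splice_def)

lemma splice_shift: "x (i+1) = y (i+1) \<Longrightarrow> splice x y i = splice x y (i+1)"
proof
  fix l assume "x (i+1) = y (i+1)"
  then show "splice x y i l = splice x y (i+1) l"
    by (cases "l \<le> i"; cases "l = i + 1") (auto simp: splice_def)
qed

lemma shift_in: "x \<in> shift_space A \<Longrightarrow> (\<lambda>l. x (l + k)) \<in> shift_space A"
  unfolding shift_space_def mem_Collect_eq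
proof safe
  fix l assume h: "\<forall>l. x l < dim_row A" "\<forall>l. A $$ (x l, x (l + 1)) = 1"
  show "x (l + k) < dim_row A" using h by blast
  have "l + 1 + k = (l + k) + 1" by simp
  then show "A $$ (x (l + k), x (l + 1 + k)) = 1" using h(2) by metis
qed

lemma left_shift_in: "x \<in> shift_space A \<Longrightarrow> left_shift x \<in> shift_space A"
  unfolding left_shift_def using shift_in[of x A 1] by simp

lemma zo_entry: "zero_one_mat M \<Longrightarrow> i < dim_row M \<Longrightarrow> j < dim_col M \<Longrightarrow> M $$ (i,j) \<in> {0,1}"
  by (simp add: zero_one_mat_def)

lemma obj_succ: assumes "obj_mat A" "a < dim_row A" shows "\<exists>b<dim_row A. A $$ (a,b) = 1"
proof -
  from assms obtain b where b: "b < dim_row A" "A $$ (a,b) \<noteq> 0"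
    unfolding obj_mat_def nondeg_mat_def by auto
  moreover have "zero_one_mat A" "dim_col A = dim_row A" using assms(1) by (auto simp: obj_mat_def)
  ultimately have "A $$ (a,b) \<in> {0,1}" using zo_entry[of A] assms(2) by metis
  then show ?thesis using b by auto
qed

lemma obj_pred: assumes "obj_mat A" "a < dim_row A" shows "\<exists>b<dim_row A. A $$ (b,a) = 1"
proof -
  from assms obtain b where b: "b < dim_row A" "A $$ (b,a) \<noteq> 0"
    unfolding obj_mat_def nondeg_mat_def by auto
  moreover have "zero_one_mat A" "dim_col A = dim_row A" using assms(1) by (auto simp: obj_mat_def)
  ultimately have "A $$ (b,a) \<in> {0,1}" using zo_entry[of A] assms(2) by metis
  then show ?thesis using b by auto
qed

lemma pair_occurs0:
  assumes "obj_mat A" "a < dim_row A" "a' < dim_row A" "A $$ (a,a') = 1"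
  shows "\<exists>x\<in>shift_space A. x 0 = a \<and> x 1 = a'"
proof -
  let ?n = "dim_row A"
  define sc where "sc c = (SOME d. d < ?n \<and> A $$ (c,d) = 1)" for c
  define pr where "pr c = (SOME d. d < ?n \<and> A $$ (d,c) = 1)" for c
  have sc: "sc c < ?n \<and> A $$ (c, sc c) = 1" if "c < ?n" for c
    unfolding sc_def by (rule someI_ex) (use obj_succ[OF assms(1) that] in auto)
  have pr: "pr c < ?n \<and> A $$ (pr c, c) = 1" if "c < ?n" for c
    unfolding pr_def by (rule someI_ex) (use obj_pred[OF assms(1) that] in auto)
  define fw where "fw k = (sc ^^ k) a'" for k
  define bw where "bw k = (pr ^^ k) a" for k
  have fw: "fw k < ?n" for k unfolding fw_def by (induction k) (auto simp: assms sc)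
  have bw: "bw k < ?n" for k unfolding bw_def by (induction k) (auto simp: assms pr)
  define x where "x l = (if l \<ge> 1 then fw (nat (l - 1)) else bw (nat (- l)))" for l :: int
  have "x \<in> shift_space A"
    unfolding shift_space_def mem_Collect_eq
  proof safe
    fix l
    show "x l < ?n" using fw bw by (simp add: x_def)
    show "A $$ (x l, x (l+1)) = 1"
    proof (cases "l \<ge> 1")
      case True
      then have e: "nat (l + 1 - 1) = Suc (nat (l - 1))" by simp
      have "x (l+1) = fw (Suc (nat (l - 1)))" using True e by (simp add: x_def)
      also have "\<dots> = sc (x l)" using True by (simp add: x_def fw_def)
      finally show ?thesis using sc[OF fw[of "nat (l - 1)"]] True by (simp add: x_def)
    next
      case False
      show ?thesis
      proof (cases "l = 0")
        case True then show ?thesis by (simp add: x_def fw_def bw_def assms)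
      next
        case False2: False
        with False have "l < 0" by simp
        then have e: "nat (-l) = Suc (nat (-(l+1)))" by simp
        have "x l = bw (Suc (nat (-(l+1))))" using \<open>l<0\<close> e by (simp add: x_def)
        also have "\<dots> = pr (x (l+1))" using \<open>l<0\<close> by (simp add: x_def bw_def)
        finally show ?thesis using pr[OF bw[of "nat (-(l+1))"]] \<open>l<0\<close> by (simp add: x_def)
      qed
    qed
  qed
  moreover have "x 0 = a" "x 1 = a'" by (simp_all add: x_def fw_def bw_def)
  ultimately show ?thesis by blast
qed

lemma pair_occurs:
  assumes "obj_mat A" "a < dim_row A" "a' < dim_row A" "A $$ (a,a') = 1"
  shows "\<exists>x\<in>shift_space A. x i = a \<and> x (i+1) = a'"
proof -
  obtain x where x: "x \<in> shift_space A" "x 0 = a" "x 1 = a'" using pair_occurs0[OF assms] by blast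
  have s: "(\<lambda>l. x (l + - i)) \<in> shift_space A" by (rule shift_in[OF x(1)])
  show ?thesis using s x by (intro bexI[of _ "\<lambda>l. x (l + - i)"]) auto
qed

lemma shift_allowed: "x \<in> shift_space A \<Longrightarrow> x l < dim_row A \<and> A $$ (x l, x (l+1)) = 1"
  by (auto simp: shift_space_def)

lemma prod_entry:
  assumes "i < dim_row P" "j < dim_col Q" "dim_col P = dim_row Q"
  shows "(P * Q) $$ (i,j) = (\<Sum>b\<in>{0..<dim_col P}. P $$ (i,b) * Q $$ (b,j))"
  using assms by (simp add: index_mult_mat scalar_prod_def)

lemma mat01_prod_eq:
  fixes P Q T :: "nat mat"
  assumes P: "P \<in> carrier_mat m k" and Q: "Q \<in> carrier_mat k l" and T: "T \<in> carrier_mat m l"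
    and zP: "zero_one_mat P" and zQ: "zero_one_mat Q" and zT: "zero_one_mat T"
    and ex: "\<And>i j. i<m \<Longrightarrow> j<l \<Longrightarrow> T $$ (i,j) = 1 \<Longrightarrow> \<exists>b<k. P $$ (i,b) = 1 \<and> Q $$ (b,j) = 1"
    and un: "\<And>i j b1 b2. i<m \<Longrightarrow> j<l \<Longrightarrow> b1<k \<Longrightarrow> b2<k \<Longrightarrow> P$$(i,b1)=1 \<Longrightarrow> Q$$(b1,j)=1
        \<Longrightarrow> P$$(i,b2)=1 \<Longrightarrow> Q$$(b2,j)=1 \<Longrightarrow> b1 = b2 \<and> T$$(i,j)=1"
  shows "T = P * Q"
proof (rule eq_matI)
  show "dim_row T = dim_row (P * Q)" "dim_col T = dim_col (P * Q)" using P Q T by auto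
  fix i j assume i: "i < dim_row (P * Q)" and j: "j < dim_col (P * Q)"
  then have i': "i < m" and j': "j < l" using P Q by auto
  have e: "(P * Q) $$ (i,j) = (\<Sum>b\<in>{0..<k}. P $$ (i,b) * Q $$ (b,j))"
    using prod_entry[of i P j Q] i' j' P Q by auto
  have t01: "\<And>b. b < k \<Longrightarrow> P $$ (i,b) * Q $$ (b,j) = (if P $$ (i,b) = 1 \<and> Q $$ (b,j) = 1 then 1 else 0)"
  proof -
    fix b assume b: "b < k"
    have "P $$ (i,b) \<in> {0,1}" "Q $$ (b,j) \<in> {0,1}"
      using zP zQ P Q i' j' b unfolding zero_one_mat_def by auto
    then show "P $$ (i,b) * Q $$ (b,j) = (if P $$ (i,b) = 1 \<and> Q $$ (b,j) = 1 then 1 else 0)" by auto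
  qed
  have T01: "T $$ (i,j) \<in> {0,1}" using zT T i' j' unfolding zero_one_mat_def by auto
  show "T $$ (i,j) = (P * Q) $$ (i,j)"
  proof (cases "T $$ (i,j) = 1")
    case True
    then obtain b0 where b0: "b0 < k" "P $$ (i,b0) = 1" "Q $$ (b0,j) = 1" using ex i' j' by blast
    have "(P * Q) $$ (i,j) = (\<Sum>b\<in>{0..<k}. if b = b0 then 1 else 0)"
      unfolding e
    proof (rule sum.cong[OF refl])
      fix b assume "b \<in> {0..<k}"
      then have bk: "b < k" by simp
      show "P $$ (i,b) * Q $$ (b,j) = (if b = b0 then 1 else 0)"
      proof (cases "P $$ (i,b) = 1 \<and> Q $$ (b,j) = 1")
        case True
        then have "b = b0" using un[OF i' j' bk b0(1)] b0(2,3) by blast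
        then show ?thesis using t01[OF bk] True by simp
      next
        case False
        then have "b \<noteq> b0" using b0 by auto
        then show ?thesis using t01[OF bk] False by simp
      qed
    qed
    also have "\<dots> = 1" using b0 by simp
    finally show ?thesis using True by simp
  next
    case False
    then have T0: "T $$ (i,j) = 0" using T01 by auto
    have "(P * Q) $$ (i,j) = (\<Sum>b\<in>{0..<k}. 0)"
      unfolding e
    proof (rule sum.cong[OF refl])
      fix b assume "b \<in> {0..<k}"
      then have bk: "b < k" by simp
      have "\<not> (P $$ (i,b) = 1 \<and> Q $$ (b,j) = 1)"
      proof
        assume "P $$ (i,b) = 1 \<and> Q $$ (b,j) = 1"
        then have "T $$ (i,j) = 1" using un[OF i' j' bk bk] by blast
        then show False using False by simp
      qed
      then show "P $$ (i,b) * Q $$ (b,j) = 0" using t01[OF bk] by simp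
    qed
    then show ?thesis using T0 by simp
  qed
qed

lemma mat01_prod_props:
  fixes P Q T :: "nat mat"
  assumes P: "P \<in> carrier_mat m k" and Q: "Q \<in> carrier_mat k l"
    and zP: "zero_one_mat P" and zQ: "zero_one_mat Q" and zT: "zero_one_mat T"
    and TPQ: "T = P * Q" and i: "i < m" and j: "j < l"
  shows "b < k \<Longrightarrow> P $$ (i,b) = 1 \<Longrightarrow> Q $$ (b,j) = 1 \<Longrightarrow> T $$ (i,j) = 1"
    and "T $$ (i,j) = 1 \<Longrightarrow> \<exists>b<k. P $$ (i,b) = 1 \<and> Q $$ (b,j) = 1"
    and "b1 < k \<Longrightarrow> b2 < k \<Longrightarrow> P $$ (i,b1) = 1 \<Longrightarrow> Q $$ (b1,j) = 1
         \<Longrightarrow> P $$ (i,b2) = 1 \<Longrightarrow> Q $$ (b2,j) = 1 \<Longrightarrow> b1 = b2"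
proof -
  have e: "T $$ (i,j) = (\<Sum>b\<in>{0..<k}. P $$ (i,b) * Q $$ (b,j))"
    using prod_entry[of i P j Q] i j P Q TPQ by auto
  have T01: "T $$ (i,j) \<in> {0,1}" using zT TPQ P Q i j unfolding zero_one_mat_def by auto
  {
    assume b: "b < k" "P $$ (i,b) = 1" "Q $$ (b,j) = 1"
    have "P $$ (i,b) * Q $$ (b,j) \<le> (\<Sum>b\<in>{0..<k}. P $$ (i,b) * Q $$ (b,j))"
      by (rule member_le_sum) (use b in auto)
    then have "1 \<le> T $$ (i,j)" using e b by simp
    then show "T $$ (i,j) = 1" using T01 by auto
  }
  {
    assume "T $$ (i,j) = 1"
    then have "(\<Sum>b\<in>{0..<k}. P $$ (i,b) * Q $$ (b,j)) \<noteq> 0" using e by simp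
    then obtain b where b: "b \<in> {0..<k}" "P $$ (i,b) * Q $$ (b,j) \<noteq> 0"
      using sum.not_neutral_contains_not_neutral by blast
    have "P $$ (i,b) \<in> {0,1}" by (rule zo_entry[OF zP]) (use P i b in auto)
    moreover have "Q $$ (b,j) \<in> {0,1}" by (rule zo_entry[OF zQ]) (use Q j b in auto)
    ultimately show "\<exists>b<k. P $$ (i,b) = 1 \<and> Q $$ (b,j) = 1" using b by auto
  }
  {
    assume b: "b1 < k" "b2 < k" "P $$ (i,b1) = 1" "Q $$ (b1,j) = 1" "P $$ (i,b2) = 1" "Q $$ (b2,j) = 1"
    show "b1 = b2"
    proof (rule ccontr)
      assume ne: "b1 \<noteq> b2"
      have "(\<Sum>b\<in>{b1,b2}. P $$ (i,b) * Q $$ (b,j)) \<le> (\<Sum>b\<in>{0..<k}. P $$ (i,b) * Q $$ (b,j))"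
        by (rule sum_mono2) (use b in auto)
      then have "2 \<le> T $$ (i,j)" using e b ne by simp
      then show False using T01 by auto
    qed
  }
qed




locale elem =
  fixes A B :: "nat mat" and \<phi> :: "(int \<Rightarrow> nat) \<Rightarrow> int \<Rightarrow> nat"
  assumes objA: "obj_mat A" and objB: "obj_mat B" and el: "elementary A B \<phi>"
begin

lemma conj: "conjugacy A B \<phi>" using el by (simp add: elementary_def)

lemma ext: "\<phi> \<in> extensional (shift_space A)" using conj by (simp add: conjugacy_def)

lemma basics:
  shows "\<And>x. x \<in> shift_space A \<Longrightarrow> \<phi> x \<in> shift_space B"
    and "\<And>y. y \<in> shift_space B \<Longrightarrow> inv_conj A \<phi> y \<in> shift_space A"
    and "\<And>x. x \<in> shift_space A \<Longrightarrow> inv_conj A \<phi> (\<phi> x) = x"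
    and "\<And>y. y \<in> shift_space B \<Longrightarrow> \<phi> (inv_conj A \<phi> y) = y"
proof -
  obtain \<psi> where h: "homeomorphism (shift_space A) (shift_space B) \<phi> \<psi>"
    using conj by (auto simp: conjugacy_def)
  then have im: "\<phi> ` shift_space A = shift_space B" and li: "\<And>x. x \<in> shift_space A \<Longrightarrow> \<psi> (\<phi> x) = x"
    by (auto simp: homeomorphism_def)
  have inj: "inj_on \<phi> (shift_space A)" by (rule inj_on_inverseI[of _ \<psi>]) (use li in auto)
  show "\<And>x. x \<in> shift_space A \<Longrightarrow> \<phi> x \<in> shift_space B" using im by auto
  show "\<And>y. y \<in> shift_space B \<Longrightarrow> inv_conj A \<phi> y \<in> shift_space A"
    unfolding inv_conj_def using im by (metis inv_into_into)
  show "\<And>x. x \<in> shift_space A \<Longrightarrow> inv_conj A \<phi> (\<phi> x) = x"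
    unfolding inv_conj_def using inj by (simp add: inv_into_f_f)
  show "\<And>y. y \<in> shift_space B \<Longrightarrow> \<phi> (inv_conj A \<phi> y) = y"
    unfolding inv_conj_def using im by (metis f_inv_into_f)
qed

lemmas phi_in = basics(1) and psi_in = basics(2) and psi_phi = basics(3) and phi_psi = basics(4)

lemma loc: "x \<in> shift_space A \<Longrightarrow> \<phi> x i = loc_rule A \<phi> (x i) (x (i+1))"
proof -
  obtain f where "\<forall>x\<in>shift_space A. \<forall>i. \<phi> x i = f (x i) (x (i+1))" using el by (auto simp: elementary_def)
  then have "\<exists>f. \<forall>x\<in>shift_space A. \<forall>i. \<phi> x i = f (x i) (x (i+1))" by blast
  then have "\<forall>x\<in>shift_space A. \<forall>i. \<phi> x i = loc_rule A \<phi> (x i) (x (i+1))"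
    unfolding loc_rule_def by (rule someI_ex)
  then show "x \<in> shift_space A \<Longrightarrow> \<phi> x i = loc_rule A \<phi> (x i) (x (i+1))" by blast
qed

lemma iloc: "y \<in> shift_space B \<Longrightarrow> inv_conj A \<phi> y i = inv_loc_rule A B \<phi> (y (i-1)) (y i)"
proof -
  obtain g where "\<forall>y\<in>shift_space B. \<forall>i. inv_conj A \<phi> y i = g (y (i-1)) (y i)" using el by (auto simp: elementary_def)
  then have "\<exists>g. \<forall>y\<in>shift_space B. \<forall>i. inv_conj A \<phi> y i = g (y (i-1)) (y i)" by blast
  then have "\<forall>y\<in>shift_space B. \<forall>i. inv_conj A \<phi> y i = inv_loc_rule A B \<phi> (y (i-1)) (y i)"
    unfolding inv_loc_rule_def by (rule someI_ex)
  then show "y \<in> shift_space B \<Longrightarrow> inv_conj A \<phi> y i = inv_loc_rule A B \<phi> (y (i-1)) (y i)" by blast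
qed

lemma phi_splice:
  assumes "x \<in> shift_space A" "x' \<in> shift_space A" "x i = x' i"
  shows "\<phi> (splice x x' i) = splice (\<phi> x) (\<phi> x') (i - 1)"
proof
  fix l
  have s: "splice x x' i \<in> shift_space A" using splice_in assms by blast
  show "\<phi> (splice x x' i) l = splice (\<phi> x) (\<phi> x') (i - 1) l"
  proof (cases "l < i")
    case True
    then show ?thesis using loc[OF s, of l] loc[OF assms(1), of l] by (simp add: splice_def)
  next
    case False
    then have "splice x x' i l = x' l" "splice x x' i (l+1) = x' (l+1)"
      using assms(3) by (auto simp: splice_def)
    then show ?thesis using loc[OF s, of l] loc[OF assms(2), of l] False by (simp add: splice_def)
  qed
qed

lemma psi_splice:
  assumes "y \<in> shift_space B" "y' \<in> shift_space B" "y i = y' i"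
  shows "inv_conj A \<phi> (splice y y' i) = splice (inv_conj A \<phi> y) (inv_conj A \<phi> y') i"
proof
  fix l
  have s: "splice y y' i \<in> shift_space B" using splice_in assms by blast
  show "inv_conj A \<phi> (splice y y' i) l = splice (inv_conj A \<phi> y) (inv_conj A \<phi> y') i l"
  proof (cases "l \<le> i")
    case True
    then show ?thesis using iloc[OF s, of l] iloc[OF assms(1), of l] by (simp add: splice_def)
  next
    case False
    have "splice y y' i (l-1) = y' (l-1)"
    proof (cases "l - 1 = i")
      case True then show ?thesis using assms(3) by (simp add: splice_def)
    next
      case False2: False then show ?thesis using False by (simp add: splice_def)
    qed
    moreover have "splice y y' i l = y' l" using False by (simp add: splice_def)
    ultimately show ?thesis using iloc[OF s, of l] iloc[OF assms(2), of l] False by (simp add: splice_def)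
  qed
qed

lemma phi_shift: "x \<in> shift_space A \<Longrightarrow> \<phi> (\<lambda>l. x (l + k)) = (\<lambda>l. \<phi> x (l + k))"
  using loc[of "\<lambda>l. x (l + k)"] loc[of x] shift_in[of x A k] by (auto simp: algebra_simps)

lemma psi_shift: "y \<in> shift_space B \<Longrightarrow> inv_conj A \<phi> (\<lambda>l. y (l + k)) = (\<lambda>l. inv_conj A \<phi> y (l + k))"
  using iloc[of "\<lambda>l. y (l + k)"] iloc[of y] shift_in[of y B k] by (auto simp: algebra_simps)

definition Rp where "Rp a b \<longleftrightarrow> (\<exists>x\<in>shift_space A. x 0 = a \<and> \<phi> x 0 = b)"
definition Sp where "Sp b a \<longleftrightarrow> (\<exists>y\<in>shift_space B. y 0 = b \<and> inv_conj A \<phi> y 1 = a)"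

lemma Rp_pt: "x \<in> shift_space A \<Longrightarrow> Rp (x i) (\<phi> x i)"
  unfolding Rp_def
  by (rule bexI[of _ "\<lambda>l. x (l + i)"]) (auto simp: phi_shift shift_in)

lemma Rp_at: assumes "Rp a b" shows "\<exists>x\<in>shift_space A. x i = a \<and> \<phi> x i = b"
proof -
  obtain x where x: "x \<in> shift_space A" "x 0 = a" "\<phi> x 0 = b" using assms Rp_def by blast
  have s: "(\<lambda>l. x (l + - i)) \<in> shift_space A" by (rule shift_in[OF x(1)])
  have p: "\<phi> (\<lambda>l. x (l + - i)) = (\<lambda>l. \<phi> x (l + - i))" by (rule phi_shift[OF x(1)])
  show ?thesis using s p x by (intro bexI[of _ "\<lambda>l. x (l + - i)"]) auto
qed

lemma Sp_pt: "y \<in> shift_space B \<Longrightarrow> Sp (y i) (inv_conj A \<phi> y (i+1))"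
  unfolding Sp_def
  by (rule bexI[of _ "\<lambda>l. y (l + i)"]) (auto simp: psi_shift shift_in algebra_simps)

lemma Sp_at: assumes "Sp b a" shows "\<exists>y\<in>shift_space B. y i = b \<and> inv_conj A \<phi> y (i+1) = a"
proof -
  obtain y where y: "y \<in> shift_space B" "y 0 = b" "inv_conj A \<phi> y 1 = a" using assms Sp_def by blast
  have s: "(\<lambda>l. y (l + - i)) \<in> shift_space B" by (rule shift_in[OF y(1)])
  have p: "inv_conj A \<phi> (\<lambda>l. y (l + - i)) = (\<lambda>l. inv_conj A \<phi> y (l + - i))" by (rule psi_shift[OF y(1)])
  show ?thesis using s p y by (intro bexI[of _ "\<lambda>l. y (l + - i)"]) auto
qed

lemma Rp_bound: "Rp a b \<Longrightarrow> a < dim_row A \<and> b < dim_row B"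
  unfolding Rp_def using phi_in by (auto simp: shift_space_def)

lemma Sp_bound: "Sp b a \<Longrightarrow> a < dim_row A \<and> b < dim_row B"
  unfolding Sp_def using psi_in by (auto simp: shift_space_def)

lemma R_carrier: "R_of A B \<phi> \<in> carrier_mat (dim_row A) (dim_row B)"
  by (simp add: R_of_def)
lemma S_carrier: "S_of A B \<phi> \<in> carrier_mat (dim_row B) (dim_row A)"
  by (simp add: S_of_def)
lemma R_01: "zero_one_mat (R_of A B \<phi>)"
  by (simp add: R_of_def zero_one_mat_def)
lemma S_01: "zero_one_mat (S_of A B \<phi>)"
  by (simp add: S_of_def zero_one_mat_def)

lemma R_entry:
  assumes "a < dim_row A" "b < dim_row B"
  shows "R_of A B \<phi> $$ (a,b) = (if Rp a b then 1 else 0)"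
proof -
  have "(\<exists>a'<dim_row A. A $$ (a,a') = 1 \<and> loc_rule A \<phi> a a' = b) \<longleftrightarrow> Rp a b"
  proof
    assume "\<exists>a'<dim_row A. A $$ (a,a') = 1 \<and> loc_rule A \<phi> a a' = b"
    then obtain a' where a': "a' < dim_row A" "A $$ (a,a') = 1" "loc_rule A \<phi> a a' = b" by blast
    obtain x where x: "x \<in> shift_space A" "x 0 = a" "x 1 = a'"
      using pair_occurs0[OF objA assms(1) a'(1,2)] by blast
    show "Rp a b" unfolding Rp_def using x loc[OF x(1), of 0] a' by auto
  next
    assume "Rp a b"
    then obtain x where x: "x \<in> shift_space A" "x 0 = a" "\<phi> x 0 = b" by (auto simp: Rp_def)
    show "\<exists>a'<dim_row A. A $$ (a,a') = 1 \<and> loc_rule A \<phi> a a' = b"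
      using x loc[OF x(1), of 0] shift_allowed[OF x(1), of 0] shift_allowed[OF x(1), of 1]
      by (intro exI[of _ "x 1"]) auto
  qed
  then show ?thesis using assms by (simp add: R_of_def)
qed

lemma S_entry:
  assumes "b < dim_row B" "a < dim_row A"
  shows "S_of A B \<phi> $$ (b,a) = (if Sp b a then 1 else 0)"
proof -
  have "(\<exists>b'<dim_row B. B $$ (b,b') = 1 \<and> inv_loc_rule A B \<phi> b b' = a) \<longleftrightarrow> Sp b a"
  proof
    assume "\<exists>b'<dim_row B. B $$ (b,b') = 1 \<and> inv_loc_rule A B \<phi> b b' = a"
    then obtain b' where b': "b' < dim_row B" "B $$ (b,b') = 1" "inv_loc_rule A B \<phi> b b' = a" by blast
    obtain y where y: "y \<in> shift_space B" "y 0 = b" "y 1 = b'"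
      using pair_occurs0[OF objB assms(1) b'(1,2)] by blast
    show "Sp b a" unfolding Sp_def using y iloc[OF y(1), of 1] b' by auto
  next
    assume "Sp b a"
    then obtain y where y: "y \<in> shift_space B" "y 0 = b" "inv_conj A \<phi> y 1 = a" by (auto simp: Sp_def)
    show "\<exists>b'<dim_row B. B $$ (b,b') = 1 \<and> inv_loc_rule A B \<phi> b b' = a"
      using y iloc[OF y(1), of 1] shift_allowed[OF y(1), of 0] shift_allowed[OF y(1), of 1]
      by (intro exI[of _ "y 1"]) auto
  qed
  then show ?thesis using assms by (simp add: S_of_def)
qed

lemma R_one: "a < dim_row A \<Longrightarrow> b < dim_row B \<Longrightarrow> R_of A B \<phi> $$ (a,b) = 1 \<longleftrightarrow> Rp a b"
  by (simp add: R_entry)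
lemma S_one: "b < dim_row B \<Longrightarrow> a < dim_row A \<Longrightarrow> S_of A B \<phi> $$ (b,a) = 1 \<longleftrightarrow> Sp b a"
  by (simp add: S_entry)

lemma K:
  assumes "Rp a b" "Sp b a''"
  shows "\<exists>u\<in>shift_space A. u 0 = a \<and> u 1 = a'' \<and> \<phi> u 0 = b"
proof -
  obtain x where x: "x \<in> shift_space A" "x 0 = a" "\<phi> x 0 = b" using assms(1) Rp_def by blast
  obtain y' where y': "y' \<in> shift_space B" "y' 0 = b" "inv_conj A \<phi> y' 1 = a''" using assms(2) Sp_def by blast
  have e0: "\<phi> x 0 = y' 0" using x y' by simp
  define w where "w = splice (\<phi> x) y' 0"
  have w: "w \<in> shift_space B" unfolding w_def by (rule splice_in[OF phi_in[OF x(1)] y'(1) e0])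
  define u where "u = inv_conj A \<phi> w"
  have "inv_conj A \<phi> w = splice (inv_conj A \<phi> (\<phi> x)) (inv_conj A \<phi> y') 0"
    unfolding w_def by (rule psi_splice[OF phi_in[OF x(1)] y'(1) e0])
  then have u: "u = splice x (inv_conj A \<phi> y') 0" using psi_phi[OF x(1)] u_def by simp
  have "u \<in> shift_space A" unfolding u_def by (rule psi_in[OF w])
  moreover have "u 0 = a" "u 1 = a''" using u x y' by (simp_all add: splice_def)
  moreover have "\<phi> u 0 = b" using phi_psi[OF w] u_def w_def x by (simp add: splice_def)
  ultimately show ?thesis by blast
qed

lemma K':
  assumes "Sp b a" "Rp a b''"
  shows "\<exists>w\<in>shift_space B. w 0 = b \<and> w 1 = b'' \<and> inv_conj A \<phi> w 1 = a"
proof -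
  obtain y where y: "y \<in> shift_space B" "y 0 = b" "inv_conj A \<phi> y 1 = a" using assms(1) Sp_def by blast
  obtain x' where x': "x' \<in> shift_space A" "x' 1 = a" "\<phi> x' 1 = b''" using Rp_at[OF assms(2), of 1] by blast
  have e1: "inv_conj A \<phi> y 1 = x' 1" using x' y by simp
  define v where "v = splice (inv_conj A \<phi> y) x' 1"
  have v: "v \<in> shift_space A" unfolding v_def by (rule splice_in[OF psi_in[OF y(1)] x'(1) e1])
  define w where "w = \<phi> v"
  have "\<phi> v = splice (\<phi> (inv_conj A \<phi> y)) (\<phi> x') (1 - 1)"
    unfolding v_def by (rule phi_splice[OF psi_in[OF y(1)] x'(1) e1])
  then have w: "w = splice y (\<phi> x') 0" using phi_psi[OF y(1)] w_def by simp
  have "w \<in> shift_space B" unfolding w_def by (rule phi_in[OF v])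
  moreover have "w 0 = b" "w 1 = b''" using w x' y by (simp_all add: splice_def)
  moreover have "inv_conj A \<phi> w 1 = a" using psi_phi[OF v] w_def v_def y by (simp add: splice_def)
  ultimately show ?thesis by blast
qed

lemma A_eq: "A = R_of A B \<phi> * S_of A B \<phi>"
proof (rule mat01_prod_eq[OF R_carrier S_carrier _ R_01 S_01])
  show "A \<in> carrier_mat (dim_row A) (dim_row A)" using objA unfolding obj_mat_def carrier_mat_def by simp
  show "zero_one_mat A" using objA by (simp add: obj_mat_def)
  fix i j assume ij: "i < dim_row A" "j < dim_row A" "A $$ (i,j) = 1"
  obtain x where x: "x \<in> shift_space A" "x 0 = i" "x 1 = j" using pair_occurs0[OF objA ij] by blast
  have r: "Rp i (\<phi> x 0)" using Rp_pt[OF x(1), of 0] x by simp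
  have s: "Sp (\<phi> x 0) j" using Sp_pt[OF phi_in[OF x(1)], of 0] x psi_phi[OF x(1)] by simp
  have bd: "\<phi> x 0 < dim_row B" using phi_in[OF x(1)] by (auto simp: shift_space_def)
  have "R_of A B \<phi> $$ (i,\<phi> x 0) = 1" using R_one[OF ij(1) bd] r by simp
  moreover have "S_of A B \<phi> $$ (\<phi> x 0, j) = 1" using S_one[OF bd ij(2)] s by simp
  ultimately show "\<exists>b<dim_row B. R_of A B \<phi> $$ (i,b) = 1 \<and> S_of A B \<phi> $$ (b,j) = 1"
    using bd by blast
next
  fix i j b1 b2 assume h: "i < dim_row A" "j < dim_row A" "b1 < dim_row B" "b2 < dim_row B"
    "R_of A B \<phi> $$ (i,b1) = 1" "S_of A B \<phi> $$ (b1,j) = 1" "R_of A B \<phi> $$ (i,b2) = 1" "S_of A B \<phi> $$ (b2,j) = 1"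
  have r1: "Rp i b1" using R_one[OF h(1) h(3)] h(5) by simp
  have r2: "Sp b1 j" using S_one[OF h(3) h(2)] h(6) by simp
  have r3: "Rp i b2" using R_one[OF h(1) h(4)] h(7) by simp
  have r4: "Sp b2 j" using S_one[OF h(4) h(2)] h(8) by simp
  obtain u1 where u1: "u1 \<in> shift_space A" "u1 0 = i" "u1 1 = j" "\<phi> u1 0 = b1" using K[OF r1 r2] by blast
  obtain u2 where u2: "u2 \<in> shift_space A" "u2 0 = i" "u2 1 = j" "\<phi> u2 0 = b2" using K[OF r3 r4] by blast
  have "b1 = loc_rule A \<phi> i j" using loc[OF u1(1), of 0] u1 by simp
  moreover have "b2 = loc_rule A \<phi> i j" using loc[OF u2(1), of 0] u2 by simp
  moreover have "A $$ (i,j) = 1" using shift_allowed[OF u1(1), of 0] u1 by simp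
  ultimately show "b1 = b2 \<and> A $$ (i,j) = 1" by simp
qed

lemma B_eq: "B = S_of A B \<phi> * R_of A B \<phi>"
proof (rule mat01_prod_eq[OF S_carrier R_carrier _ S_01 R_01])
  show "B \<in> carrier_mat (dim_row B) (dim_row B)" using objB unfolding obj_mat_def carrier_mat_def by simp
  show "zero_one_mat B" using objB by (simp add: obj_mat_def)
  fix i j assume ij: "i < dim_row B" "j < dim_row B" "B $$ (i,j) = 1"
  obtain y where y: "y \<in> shift_space B" "y 0 = i" "y 1 = j" using pair_occurs0[OF objB ij] by blast
  have s: "Sp i (inv_conj A \<phi> y 1)" using Sp_pt[OF y(1), of 0] y by simp
  have r: "Rp (inv_conj A \<phi> y 1) j" using Rp_pt[OF psi_in[OF y(1)], of 1] y phi_psi[OF y(1)] by simp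
  have bd: "inv_conj A \<phi> y 1 < dim_row A" using psi_in[OF y(1)] by (auto simp: shift_space_def)
  have "S_of A B \<phi> $$ (i, inv_conj A \<phi> y 1) = 1" using S_one[OF ij(1) bd] s by simp
  moreover have "R_of A B \<phi> $$ (inv_conj A \<phi> y 1, j) = 1" using R_one[OF bd ij(2)] r by simp
  ultimately show "\<exists>b<dim_row A. S_of A B \<phi> $$ (i,b) = 1 \<and> R_of A B \<phi> $$ (b,j) = 1"
    using bd by blast
next
  fix i j b1 b2 assume h: "i < dim_row B" "j < dim_row B" "b1 < dim_row A" "b2 < dim_row A"
    "S_of A B \<phi> $$ (i,b1) = 1" "R_of A B \<phi> $$ (b1,j) = 1" "S_of A B \<phi> $$ (i,b2) = 1" "R_of A B \<phi> $$ (b2,j) = 1"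
  have r1: "Sp i b1" using S_one[OF h(1) h(3)] h(5) by simp
  have r2: "Rp b1 j" using R_one[OF h(3) h(2)] h(6) by simp
  have r3: "Sp i b2" using S_one[OF h(1) h(4)] h(7) by simp
  have r4: "Rp b2 j" using R_one[OF h(4) h(2)] h(8) by simp
  obtain w1 where w1: "w1 \<in> shift_space B" "w1 0 = i" "w1 1 = j" "inv_conj A \<phi> w1 1 = b1" using K'[OF r1 r2] by blast
  obtain w2 where w2: "w2 \<in> shift_space B" "w2 0 = i" "w2 1 = j" "inv_conj A \<phi> w2 1 = b2" using K'[OF r3 r4] by blast
  have "b1 = inv_loc_rule A B \<phi> i j" using iloc[OF w1(1), of 1] w1 by simp
  moreover have "b2 = inv_loc_rule A B \<phi> i j" using iloc[OF w2(1), of 1] w2 by simp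
  moreover have "B $$ (i,j) = 1" using shift_allowed[OF w1(1), of 0] w1 by simp
  ultimately show "b1 = b2 \<and> B $$ (i,j) = 1" by simp
qed

lemma dimR: "dim_row (R_of A B \<phi>) = dim_row A" "dim_col (R_of A B \<phi>) = dim_row B"
  using R_carrier by auto
lemma dimS: "dim_row (S_of A B \<phi>) = dim_row B" "dim_col (S_of A B \<phi>) = dim_row A"
  using S_carrier by auto

lemma R_nondeg: "nondeg_mat (R_of A B \<phi>)"
  unfolding nondeg_mat_def dimR
proof (intro conjI allI impI)
  fix a assume a': "a < dim_row A"
  obtain a2 where "a2 < dim_row A" "A $$ (a,a2) = 1" using obj_succ[OF objA a'] by blast
  then obtain x where x: "x \<in> shift_space A" "x 0 = a" using pair_occurs0[OF objA a'] by blast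
  have r: "Rp a (\<phi> x 0)" using Rp_pt[OF x(1), of 0] x by simp
  have bd: "\<phi> x 0 < dim_row B" using phi_in[OF x(1)] by (auto simp: shift_space_def)
  have "R_of A B \<phi> $$ (a, \<phi> x 0) = 1" using R_one[OF a' bd] r by simp
  then show "\<exists>j<dim_row B. R_of A B \<phi> $$ (a, j) \<noteq> 0" using bd by (intro exI[of _ "\<phi> x 0"]) simp
next
  fix b assume b': "b < dim_row B"
  obtain b2 where "b2 < dim_row B" "B $$ (b,b2) = 1" using obj_succ[OF objB b'] by blast
  then obtain y where y: "y \<in> shift_space B" "y 0 = b" using pair_occurs0[OF objB b'] by blast
  have r: "Rp (inv_conj A \<phi> y 0) b" using Rp_pt[OF psi_in[OF y(1)], of 0] y phi_psi[OF y(1)] by simp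
  have bd: "inv_conj A \<phi> y 0 < dim_row A" using psi_in[OF y(1)] by (auto simp: shift_space_def)
  have "R_of A B \<phi> $$ (inv_conj A \<phi> y 0, b) = 1" using R_one[OF bd b'] r by simp
  then show "\<exists>i<dim_row A. R_of A B \<phi> $$ (i, b) \<noteq> 0" using bd by (intro exI[of _ "inv_conj A \<phi> y 0"]) simp
qed

lemma S_nondeg: "nondeg_mat (S_of A B \<phi>)"
  unfolding nondeg_mat_def dimS
proof (intro conjI allI impI)
  fix b assume b': "b < dim_row B"
  obtain b2 where "b2 < dim_row B" "B $$ (b,b2) = 1" using obj_succ[OF objB b'] by blast
  then obtain y where y: "y \<in> shift_space B" "y 0 = b" using pair_occurs0[OF objB b'] by blast
  have r: "Sp b (inv_conj A \<phi> y 1)" using Sp_pt[OF y(1), of 0] y by simp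
  have bd: "inv_conj A \<phi> y 1 < dim_row A" using psi_in[OF y(1)] by (auto simp: shift_space_def)
  have "S_of A B \<phi> $$ (b, inv_conj A \<phi> y 1) = 1" using S_one[OF b' bd] r by simp
  then show "\<exists>j<dim_row A. S_of A B \<phi> $$ (b, j) \<noteq> 0" using bd by (intro exI[of _ "inv_conj A \<phi> y 1"]) simp
next
  fix a assume a': "a < dim_row A"
  obtain a0 where a0: "a0 < dim_row A" "A $$ (a0,a) = 1" using obj_pred[OF objA a'] by blast
  then obtain x where x: "x \<in> shift_space A" "x 0 = a0" "x 1 = a" using pair_occurs0[OF objA a0(1) a'] by blast
  have r: "Sp (\<phi> x 0) a" using Sp_pt[OF phi_in[OF x(1)], of 0] x psi_phi[OF x(1)] by simp
  have bd: "\<phi> x 0 < dim_row B" using phi_in[OF x(1)] by (auto simp: shift_space_def)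
  have "S_of A B \<phi> $$ (\<phi> x 0, a) = 1" using S_one[OF bd a'] r by simp
  then show "\<exists>i<dim_row B. S_of A B \<phi> $$ (i, a) \<noteq> 0" using bd by (intro exI[of _ "\<phi> x 0"]) simp
qed

end




locale comp3 = AB: elem A B \<phi> + BC: elem B C \<kappa> + AC: elem A C \<theta>
  for A B C \<phi> \<kappa> \<theta> +
  assumes comp: "\<And>x. x \<in> shift_space A \<Longrightarrow> \<theta> x = \<kappa> (\<phi> x)"
begin

lemma thinv: "z \<in> shift_space C \<Longrightarrow> inv_conj A \<theta> z = inv_conj A \<phi> (inv_conj B \<kappa> z)"
proof -
  assume z: "z \<in> shift_space C"
  have w: "inv_conj A \<phi> (inv_conj B \<kappa> z) \<in> shift_space A" by (rule AB.psi_in[OF BC.psi_in[OF z]])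
  have "\<theta> (inv_conj A \<phi> (inv_conj B \<kappa> z)) = z"
    using comp[OF w] AB.phi_psi[OF BC.psi_in[OF z]] BC.phi_psi[OF z] by simp
  then have "inv_conj A \<theta> z = inv_conj A \<theta> (\<theta> (inv_conj A \<phi> (inv_conj B \<kappa> z)))" by simp
  also have "\<dots> = inv_conj A \<phi> (inv_conj B \<kappa> z)" by (rule AC.psi_phi[OF w])
  finally show ?thesis .
qed

lemma chinv_th: assumes x: "x \<in> shift_space A" shows "inv_conj B \<kappa> (\<theta> x) = \<phi> x"
proof -
  have "\<theta> x = \<kappa> (\<phi> x)" by (rule comp[OF x])
  then show ?thesis using BC.psi_phi[OF AB.phi_in[OF x]] by simp
qed

lemma a1:
  assumes "AB.Rp a b" "BC.Rp b c"
  shows "\<exists>u\<in>shift_space A. u 0 = a \<and> \<phi> u 0 = b \<and> \<theta> u 0 = c"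
proof -
  obtain x where x: "x \<in> shift_space A" "x 0 = a" "\<phi> x 0 = b" using assms(1) AB.Rp_def by blast
  obtain y' where y': "y' \<in> shift_space B" "y' 0 = b" "\<kappa> y' 0 = c" using assms(2) BC.Rp_def by blast
  have e0: "\<phi> x 0 = y' 0" using x y' by simp
  define w where "w = splice (\<phi> x) y' 0"
  have w: "w \<in> shift_space B" unfolding w_def by (rule splice_in[OF AB.phi_in[OF x(1)] y'(1) e0])
  define u where "u = inv_conj A \<phi> w"
  have "inv_conj A \<phi> w = splice (inv_conj A \<phi> (\<phi> x)) (inv_conj A \<phi> y') 0"
    unfolding w_def by (rule AB.psi_splice[OF AB.phi_in[OF x(1)] y'(1) e0])
  then have u: "u = splice x (inv_conj A \<phi> y') 0" using AB.psi_phi[OF x(1)] u_def by simp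
  have uA: "u \<in> shift_space A" unfolding u_def by (rule AB.psi_in[OF w])
  have pu: "\<phi> u = w" unfolding u_def by (rule AB.phi_psi[OF w])
  have "\<kappa> w = splice (\<kappa> (\<phi> x)) (\<kappa> y') (0 - 1)"
    unfolding w_def by (rule BC.phi_splice[OF AB.phi_in[OF x(1)] y'(1) e0])
  then have "\<theta> u 0 = c" using comp[OF uA] pu y' by (simp add: splice_def)
  moreover have "u 0 = a" using u x by (simp add: splice_def)
  moreover have "\<phi> u 0 = b" using pu x by (simp add: w_def splice_def)
  ultimately show ?thesis using uA by blast
qed

lemma R_comp: "R_of A B \<phi> * R_of B C \<kappa> = R_of A C \<theta>"
proof (rule sym, rule mat01_prod_eq[OF AB.R_carrier BC.R_carrier AC.R_carrier AB.R_01 BC.R_01 AC.R_01])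
  fix a c assume ac: "a < dim_row A" "c < dim_row C" "R_of A C \<theta> $$ (a,c) = 1"
  then have "AC.Rp a c" using AC.R_one by simp
  then obtain x where x: "x \<in> shift_space A" "x 0 = a" "\<theta> x 0 = c" using AC.Rp_def by blast
  have r1: "AB.Rp a (\<phi> x 0)" using AB.Rp_pt[OF x(1), of 0] x by simp
  have r2: "BC.Rp (\<phi> x 0) c" using BC.Rp_pt[OF AB.phi_in[OF x(1)], of 0] x comp by simp
  have bd: "\<phi> x 0 < dim_row B" using AB.phi_in[OF x(1)] by (auto simp: shift_space_def)
  have "R_of A B \<phi> $$ (a, \<phi> x 0) = 1" using AB.R_one[OF ac(1) bd] r1 by simp
  moreover have "R_of B C \<kappa> $$ (\<phi> x 0, c) = 1" using BC.R_one[OF bd ac(2)] r2 by simp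
  ultimately show "\<exists>b<dim_row B. R_of A B \<phi> $$ (a,b) = 1 \<and> R_of B C \<kappa> $$ (b,c) = 1" using bd by blast
next
  fix a c b1 b2 assume h: "a < dim_row A" "c < dim_row C" "b1 < dim_row B" "b2 < dim_row B"
    "R_of A B \<phi> $$ (a,b1) = 1" "R_of B C \<kappa> $$ (b1,c) = 1" "R_of A B \<phi> $$ (a,b2) = 1" "R_of B C \<kappa> $$ (b2,c) = 1"
  have r1: "AB.Rp a b1" using AB.R_one[OF h(1) h(3)] h(5) by simp
  have r2: "BC.Rp b1 c" using BC.R_one[OF h(3) h(2)] h(6) by simp
  have r3: "AB.Rp a b2" using AB.R_one[OF h(1) h(4)] h(7) by simp
  have r4: "BC.Rp b2 c" using BC.R_one[OF h(4) h(2)] h(8) by simp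
  obtain u1 where u1: "u1 \<in> shift_space A" "u1 0 = a" "\<phi> u1 0 = b1" "\<theta> u1 0 = c" using a1[OF r1 r2] by blast
  obtain u2 where u2: "u2 \<in> shift_space A" "u2 0 = a" "\<phi> u2 0 = b2" "\<theta> u2 0 = c" using a1[OF r3 r4] by blast
  have "AC.Rp a c" using AC.Rp_pt[OF u1(1), of 0] u1 by simp
  then have Rac: "R_of A C \<theta> $$ (a,c) = 1" using AC.R_one[OF h(1) h(2)] by simp
  have e: "\<theta> u1 0 = \<theta> u2 0" using u1 u2 by simp
  define z where "z = splice (\<theta> u1) (\<theta> u2) 0"
  have z: "z \<in> shift_space C" unfolding z_def by (rule splice_in[OF AC.phi_in[OF u1(1)] AC.phi_in[OF u2(1)] e])
  define q where "q = inv_conj A \<theta> z"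
  have "inv_conj A \<theta> z = splice (inv_conj A \<theta> (\<theta> u1)) (inv_conj A \<theta> (\<theta> u2)) 0"
    unfolding z_def by (rule AC.psi_splice[OF AC.phi_in[OF u1(1)] AC.phi_in[OF u2(1)] e])
  then have q: "q = splice u1 u2 0" using AC.psi_phi[OF u1(1)] AC.psi_phi[OF u2(1)] q_def by simp
  have e2: "u1 0 = u2 0" using u1 u2 by simp
  have "\<phi> q = splice (\<phi> u1) (\<phi> u2) (0 - 1)" unfolding q by (rule AB.phi_splice[OF u1(1) u2(1) e2])
  then have p1: "\<phi> q 0 = b2" using u2 by (simp add: splice_def)
  have "\<phi> q = inv_conj B \<kappa> z" unfolding q_def using thinv[OF z] AB.phi_psi[OF BC.psi_in[OF z]] by simp
  also have "inv_conj B \<kappa> z = splice (inv_conj B \<kappa> (\<theta> u1)) (inv_conj B \<kappa> (\<theta> u2)) 0"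
    unfolding z_def by (rule BC.psi_splice[OF AC.phi_in[OF u1(1)] AC.phi_in[OF u2(1)] e])
  finally have "\<phi> q 0 = b1" using chinv_th[OF u1(1)] u1 by (simp add: splice_def)
  then show "b1 = b2 \<and> R_of A C \<theta> $$ (a,c) = 1" using p1 Rac by simp
qed


lemma b1:
  assumes "BC.Rp b c" "AC.Sp c a"
  shows "\<exists>yy\<in>shift_space B. yy 0 = b \<and> \<kappa> yy 0 = c \<and> inv_conj A \<phi> yy 1 = a"
proof -
  obtain y where y: "y \<in> shift_space B" "y 0 = b" "\<kappa> y 0 = c" using assms(1) BC.Rp_def by blast
  obtain z' where z': "z' \<in> shift_space C" "z' 0 = c" "inv_conj A \<theta> z' 1 = a" using assms(2) AC.Sp_def by blast
  have e: "\<kappa> y 0 = z' 0" using y z' by simp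
  define z where "z = splice (\<kappa> y) z' 0"
  have z: "z \<in> shift_space C" unfolding z_def by (rule splice_in[OF BC.phi_in[OF y(1)] z'(1) e])
  define yy where "yy = inv_conj B \<kappa> z"
  have "inv_conj B \<kappa> z = splice (inv_conj B \<kappa> (\<kappa> y)) (inv_conj B \<kappa> z') 0"
    unfolding z_def by (rule BC.psi_splice[OF BC.phi_in[OF y(1)] z'(1) e])
  then have yy: "yy = splice y (inv_conj B \<kappa> z') 0" using BC.psi_phi[OF y(1)] yy_def by simp
  have yyB: "yy \<in> shift_space B" unfolding yy_def by (rule BC.psi_in[OF z])
  have cy: "\<kappa> yy = z" unfolding yy_def by (rule BC.phi_psi[OF z])
  have "inv_conj A \<theta> z = splice (inv_conj A \<theta> (\<kappa> y)) (inv_conj A \<theta> z') 0"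
    unfolding z_def by (rule AC.psi_splice[OF BC.phi_in[OF y(1)] z'(1) e])
  moreover have "inv_conj A \<theta> z = inv_conj A \<phi> yy" unfolding yy_def by (rule thinv[OF z])
  ultimately have "inv_conj A \<phi> yy 1 = a" using z' by (simp add: splice_def)
  moreover have "yy 0 = b" using yy y by (simp add: splice_def)
  moreover have "\<kappa> yy 0 = c" using cy y by (simp add: z_def splice_def)
  ultimately show ?thesis using yyB by blast
qed

lemma S_comp1: "R_of B C \<kappa> * S_of A C \<theta> = S_of A B \<phi>"
proof (rule sym, rule mat01_prod_eq[OF BC.R_carrier AC.S_carrier AB.S_carrier BC.R_01 AC.S_01 AB.S_01])
  fix b a assume ba: "b < dim_row B" "a < dim_row A" "S_of A B \<phi> $$ (b,a) = 1"
  then have "AB.Sp b a" using AB.S_one by simp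
  then obtain y where y: "y \<in> shift_space B" "y 0 = b" "inv_conj A \<phi> y 1 = a" using AB.Sp_def by blast
  have r1: "BC.Rp b (\<kappa> y 0)" using BC.Rp_pt[OF y(1), of 0] y by simp
  have "inv_conj A \<theta> (\<kappa> y) = inv_conj A \<phi> y"
    using thinv[OF BC.phi_in[OF y(1)]] BC.psi_phi[OF y(1)] by simp
  then have r2: "AC.Sp (\<kappa> y 0) a" using AC.Sp_pt[OF BC.phi_in[OF y(1)], of 0] y by simp
  have bd: "\<kappa> y 0 < dim_row C" using BC.phi_in[OF y(1)] by (auto simp: shift_space_def)
  have "R_of B C \<kappa> $$ (b, \<kappa> y 0) = 1" using BC.R_one[OF ba(1) bd] r1 by simp
  moreover have "S_of A C \<theta> $$ (\<kappa> y 0, a) = 1" using AC.S_one[OF bd ba(2)] r2 by simp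
  ultimately show "\<exists>c<dim_row C. R_of B C \<kappa> $$ (b,c) = 1 \<and> S_of A C \<theta> $$ (c,a) = 1" using bd by blast
next
  fix b a c1 c2 assume h: "b < dim_row B" "a < dim_row A" "c1 < dim_row C" "c2 < dim_row C"
    "R_of B C \<kappa> $$ (b,c1) = 1" "S_of A C \<theta> $$ (c1,a) = 1" "R_of B C \<kappa> $$ (b,c2) = 1" "S_of A C \<theta> $$ (c2,a) = 1"
  have r1: "BC.Rp b c1" using BC.R_one[OF h(1) h(3)] h(5) by simp
  have r2: "AC.Sp c1 a" using AC.S_one[OF h(3) h(2)] h(6) by simp
  have r3: "BC.Rp b c2" using BC.R_one[OF h(1) h(4)] h(7) by simp
  have r4: "AC.Sp c2 a" using AC.S_one[OF h(4) h(2)] h(8) by simp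
  obtain y1 where y1: "y1 \<in> shift_space B" "y1 0 = b" "\<kappa> y1 0 = c1" "inv_conj A \<phi> y1 1 = a" using b1[OF r1 r2] by blast
  obtain y2 where y2: "y2 \<in> shift_space B" "y2 0 = b" "\<kappa> y2 0 = c2" "inv_conj A \<phi> y2 1 = a" using b1[OF r3 r4] by blast
  have "AB.Sp b a" using AB.Sp_pt[OF y1(1), of 0] y1 by simp
  then have Sba: "S_of A B \<phi> $$ (b,a) = 1" using AB.S_one[OF h(1) h(2)] by simp
  have e: "y1 0 = y2 0" using y1 y2 by simp
  define Y where "Y = splice y1 y2 0"
  have Y: "Y \<in> shift_space B" unfolding Y_def by (rule splice_in[OF y1(1) y2(1) e])
  have "\<kappa> Y = splice (\<kappa> y1) (\<kappa> y2) (0 - 1)" unfolding Y_def by (rule BC.phi_splice[OF y1(1) y2(1) e])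
  then have cY: "\<kappa> Y 0 = c2" using y2 by (simp add: splice_def)
  have e1: "inv_conj A \<phi> y1 (0+1) = inv_conj A \<phi> y2 (0+1)" using y1 y2 by simp
  have "inv_conj A \<phi> Y = splice (inv_conj A \<phi> y1) (inv_conj A \<phi> y2) 0"
    unfolding Y_def by (rule AB.psi_splice[OF y1(1) y2(1) e])
  also have "\<dots> = splice (inv_conj A \<phi> y1) (inv_conj A \<phi> y2) (0+1)" by (rule splice_shift[where x="inv_conj A \<phi> y1" and y="inv_conj A \<phi> y2" and i=0, OF e1])
  finally have pY: "inv_conj A \<phi> Y = splice (inv_conj A \<phi> y1) (inv_conj A \<phi> y2) 1" by simp
  have pYA: "inv_conj A \<phi> Y \<in> shift_space A" by (rule AB.psi_in[OF Y])
  have "\<theta> (inv_conj A \<phi> Y) = \<kappa> Y" using comp[OF pYA] AB.phi_psi[OF Y] by simp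
  moreover have e2: "inv_conj A \<phi> y1 1 = inv_conj A \<phi> y2 1" using y1 y2 by simp
  moreover have "\<theta> (splice (inv_conj A \<phi> y1) (inv_conj A \<phi> y2) 1)
      = splice (\<theta> (inv_conj A \<phi> y1)) (\<theta> (inv_conj A \<phi> y2)) (1 - 1)"
    by (rule AC.phi_splice[OF AB.psi_in[OF y1(1)] AB.psi_in[OF y2(1)] e2])
  moreover have "\<theta> (inv_conj A \<phi> y1) = \<kappa> y1"
    using comp[OF AB.psi_in[OF y1(1)]] AB.phi_psi[OF y1(1)] by simp
  ultimately have "\<kappa> Y 0 = c1" using pY y1 by (simp add: splice_def)
  then show "c1 = c2 \<and> S_of A B \<phi> $$ (b,a) = 1" using cY Sba by simp
qed

lemma c1:
  assumes "AC.Sp c a" "AB.Rp a b"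
  shows "\<exists>X\<in>shift_space A. \<theta> X 0 = c \<and> X 1 = a \<and> \<phi> X 1 = b"
proof -
  obtain z where z: "z \<in> shift_space C" "z 0 = c" "inv_conj A \<theta> z 1 = a" using assms(1) AC.Sp_def by blast
  obtain x' where x': "x' \<in> shift_space A" "x' 1 = a" "\<phi> x' 1 = b" using AB.Rp_at[OF assms(2), of 1] by blast
  have e: "inv_conj A \<theta> z 1 = x' 1" using z x' by simp
  define X where "X = splice (inv_conj A \<theta> z) x' 1"
  have X: "X \<in> shift_space A" unfolding X_def by (rule splice_in[OF AC.psi_in[OF z(1)] x'(1) e])
  have "\<theta> X = splice (\<theta> (inv_conj A \<theta> z)) (\<theta> x') (1 - 1)"
    unfolding X_def by (rule AC.phi_splice[OF AC.psi_in[OF z(1)] x'(1) e])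
  then have "\<theta> X 0 = c" using AC.phi_psi[OF z(1)] z by (simp add: splice_def)
  moreover have "\<phi> X = splice (\<phi> (inv_conj A \<theta> z)) (\<phi> x') (1 - 1)"
    unfolding X_def by (rule AB.phi_splice[OF AC.psi_in[OF z(1)] x'(1) e])
  then have "\<phi> X 1 = b" using x' by (simp add: splice_def)
  moreover have "X 1 = a" using z by (simp add: X_def splice_def)
  ultimately show ?thesis using X by blast
qed

lemma S_comp2: "S_of A C \<theta> * R_of A B \<phi> = S_of B C \<kappa>"
proof (rule sym, rule mat01_prod_eq[OF AC.S_carrier AB.R_carrier BC.S_carrier AC.S_01 AB.R_01 BC.S_01])
  fix c b assume cb: "c < dim_row C" "b < dim_row B" "S_of B C \<kappa> $$ (c,b) = 1"
  then have "BC.Sp c b" using BC.S_one by simp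
  then obtain z where z: "z \<in> shift_space C" "z 0 = c" "inv_conj B \<kappa> z 1 = b" using BC.Sp_def by blast
  have xA: "inv_conj A \<theta> z \<in> shift_space A" by (rule AC.psi_in[OF z(1)])
  have r1: "AC.Sp c (inv_conj A \<theta> z 1)" using AC.Sp_pt[OF z(1), of 0] z by simp
  have "\<phi> (inv_conj A \<theta> z) = inv_conj B \<kappa> z"
    using thinv[OF z(1)] AB.phi_psi[OF BC.psi_in[OF z(1)]] by simp
  then have r2: "AB.Rp (inv_conj A \<theta> z 1) b" using AB.Rp_pt[OF xA, of 1] z by simp
  have bd: "inv_conj A \<theta> z 1 < dim_row A" using xA by (auto simp: shift_space_def)
  have "S_of A C \<theta> $$ (c, inv_conj A \<theta> z 1) = 1" using AC.S_one[OF cb(1) bd] r1 by simp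
  moreover have "R_of A B \<phi> $$ (inv_conj A \<theta> z 1, b) = 1" using AB.R_one[OF bd cb(2)] r2 by simp
  ultimately show "\<exists>a<dim_row A. S_of A C \<theta> $$ (c,a) = 1 \<and> R_of A B \<phi> $$ (a,b) = 1" using bd by blast
next
  fix c b a1 a2 assume h: "c < dim_row C" "b < dim_row B" "a1 < dim_row A" "a2 < dim_row A"
    "S_of A C \<theta> $$ (c,a1) = 1" "R_of A B \<phi> $$ (a1,b) = 1" "S_of A C \<theta> $$ (c,a2) = 1" "R_of A B \<phi> $$ (a2,b) = 1"
  have r1: "AC.Sp c a1" using AC.S_one[OF h(1) h(3)] h(5) by simp
  have r2: "AB.Rp a1 b" using AB.R_one[OF h(3) h(2)] h(6) by simp
  have r3: "AC.Sp c a2" using AC.S_one[OF h(1) h(4)] h(7) by simp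
  have r4: "AB.Rp a2 b" using AB.R_one[OF h(4) h(2)] h(8) by simp
  obtain X1 where X1: "X1 \<in> shift_space A" "\<theta> X1 0 = c" "X1 1 = a1" "\<phi> X1 1 = b" using c1[OF r1 r2] by blast
  obtain X2 where X2: "X2 \<in> shift_space A" "\<theta> X2 0 = c" "X2 1 = a2" "\<phi> X2 1 = b" using c1[OF r3 r4] by blast
  have "BC.Sp (\<theta> X1 0) (inv_conj B \<kappa> (\<theta> X1) (0+1))" by (rule BC.Sp_pt[OF AC.phi_in[OF X1(1)]])
  then have "BC.Sp c b" using chinv_th[OF X1(1)] X1 by simp
  then have Scb: "S_of B C \<kappa> $$ (c,b) = 1" using BC.S_one[OF h(1) h(2)] by simp
  have e: "\<theta> X1 0 = \<theta> X2 0" using X1 X2 by simp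
  define Z where "Z = splice (\<theta> X1) (\<theta> X2) 0"
  have Z: "Z \<in> shift_space C" unfolding Z_def by (rule splice_in[OF AC.phi_in[OF X1(1)] AC.phi_in[OF X2(1)] e])
  have "inv_conj A \<theta> Z = splice (inv_conj A \<theta> (\<theta> X1)) (inv_conj A \<theta> (\<theta> X2)) 0"
    unfolding Z_def by (rule AC.psi_splice[OF AC.phi_in[OF X1(1)] AC.phi_in[OF X2(1)] e])
  then have iZ: "inv_conj A \<theta> Z = splice X1 X2 0" using AC.psi_phi[OF X1(1)] AC.psi_phi[OF X2(1)] by simp
  have "inv_conj B \<kappa> Z = splice (inv_conj B \<kappa> (\<theta> X1)) (inv_conj B \<kappa> (\<theta> X2)) 0"
    unfolding Z_def by (rule BC.psi_splice[OF AC.phi_in[OF X1(1)] AC.phi_in[OF X2(1)] e])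
  then have "inv_conj B \<kappa> Z = splice (\<phi> X1) (\<phi> X2) 0" using chinv_th[OF X1(1)] chinv_th[OF X2(1)] by simp
  also have e1: "\<phi> X1 (0+1) = \<phi> X2 (0+1)" using X1 X2 by simp
  then have "splice (\<phi> X1) (\<phi> X2) 0 = splice (\<phi> X1) (\<phi> X2) (0+1)"
    by (rule splice_shift[where x="\<phi> X1" and y="\<phi> X2" and i=0])
  finally have cZ: "inv_conj B \<kappa> Z = splice (\<phi> X1) (\<phi> X2) 1" by simp
  have e2: "\<phi> X1 1 = \<phi> X2 1" using X1 X2 by simp
  have "inv_conj A \<theta> Z = inv_conj A \<phi> (inv_conj B \<kappa> Z)" by (rule thinv[OF Z])
  also have "\<dots> = splice (inv_conj A \<phi> (\<phi> X1)) (inv_conj A \<phi> (\<phi> X2)) 1"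
    unfolding cZ by (rule AB.psi_splice[OF AB.phi_in[OF X1(1)] AB.phi_in[OF X2(1)] e2])
  also have "\<dots> = splice X1 X2 1" using AB.psi_phi[OF X1(1)] AB.psi_phi[OF X2(1)] by simp
  finally have "splice X1 X2 0 1 = splice X1 X2 1 1" using iZ by simp
  then have "a1 = a2" using X1 X2 by (simp add: splice_def)
  then show "a1 = a2 \<and> S_of B C \<kappa> $$ (c,b) = 1" using Scb by simp
qed

end



locale sse_pair =
  fixes A B R S :: "nat mat"
  assumes objA: "obj_mat A" and objB: "obj_mat B"
    and Rc: "R \<in> carrier_mat (dim_row A) (dim_row B)" and Sc: "S \<in> carrier_mat (dim_row B) (dim_row A)"
    and zR: "zero_one_mat R" and zS: "zero_one_mat S" and nR: "nondeg_mat R" and nS: "nondeg_mat S"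
    and AR: "A = R * S" and BS: "B = S * R"
begin

lemma zA: "zero_one_mat A" using objA unfolding obj_mat_def by simp
lemma zB: "zero_one_mat B" using objB unfolding obj_mat_def by simp

lemma A_mid: "a < dim_row A \<Longrightarrow> a' < dim_row A \<Longrightarrow> b < dim_row B \<Longrightarrow> R $$ (a,b) = 1 \<Longrightarrow> S $$ (b,a') = 1 \<Longrightarrow> A $$ (a,a') = 1"
  using mat01_prod_props(1)[OF Rc Sc zR zS zA AR] by blast
lemma A_ex: "a < dim_row A \<Longrightarrow> a' < dim_row A \<Longrightarrow> A $$ (a,a') = 1 \<Longrightarrow> \<exists>b<dim_row B. R $$ (a,b) = 1 \<and> S $$ (b,a') = 1"
  using mat01_prod_props(2)[OF Rc Sc zR zS zA AR] by blast
lemma A_un: "a < dim_row A \<Longrightarrow> a' < dim_row A \<Longrightarrow> b1 < dim_row B \<Longrightarrow> b2 < dim_row B \<Longrightarrow>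
   R $$ (a,b1) = 1 \<Longrightarrow> S $$ (b1,a') = 1 \<Longrightarrow> R $$ (a,b2) = 1 \<Longrightarrow> S $$ (b2,a') = 1 \<Longrightarrow> b1 = b2"
  using mat01_prod_props(3)[OF Rc Sc zR zS zA AR] by blast
lemma B_mid: "b < dim_row B \<Longrightarrow> b' < dim_row B \<Longrightarrow> a < dim_row A \<Longrightarrow> S $$ (b,a) = 1 \<Longrightarrow> R $$ (a,b') = 1 \<Longrightarrow> B $$ (b,b') = 1"
  using mat01_prod_props(1)[OF Sc Rc zS zR zB BS] by blast
lemma B_ex: "b < dim_row B \<Longrightarrow> b' < dim_row B \<Longrightarrow> B $$ (b,b') = 1 \<Longrightarrow> \<exists>a<dim_row A. S $$ (b,a) = 1 \<and> R $$ (a,b') = 1"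
  using mat01_prod_props(2)[OF Sc Rc zS zR zB BS] by blast
lemma B_un: "b < dim_row B \<Longrightarrow> b' < dim_row B \<Longrightarrow> a1 < dim_row A \<Longrightarrow> a2 < dim_row A \<Longrightarrow>
   S $$ (b,a1) = 1 \<Longrightarrow> R $$ (a1,b') = 1 \<Longrightarrow> S $$ (b,a2) = 1 \<Longrightarrow> R $$ (a2,b') = 1 \<Longrightarrow> a1 = a2"
  using mat01_prod_props(3)[OF Sc Rc zS zR zB BS] by blast

definition bm where "bm a a' = (SOME b. b < dim_row B \<and> R $$ (a,b) = 1 \<and> S $$ (b,a') = 1)"
definition am where "am b b' = (SOME a. a < dim_row A \<and> S $$ (b,a) = 1 \<and> R $$ (a,b') = 1)"

lemma bm: "a < dim_row A \<Longrightarrow> a' < dim_row A \<Longrightarrow> A $$ (a,a') = 1 \<Longrightarrow>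
    bm a a' < dim_row B \<and> R $$ (a, bm a a') = 1 \<and> S $$ (bm a a', a') = 1"
  unfolding bm_def by (rule someI_ex) (rule A_ex)

lemma am: "b < dim_row B \<Longrightarrow> b' < dim_row B \<Longrightarrow> B $$ (b,b') = 1 \<Longrightarrow>
    am b b' < dim_row A \<and> S $$ (b, am b b') = 1 \<and> R $$ (am b b', b') = 1"
  unfolding am_def by (rule someI_ex) (rule B_ex)

lemma bm_eq: assumes "a < dim_row A" "a' < dim_row A" "b < dim_row B" "R $$ (a,b) = 1" "S $$ (b,a') = 1"
  shows "bm a a' = b"
proof -
  have A1: "A $$ (a,a') = 1" by (rule A_mid[OF assms])
  show ?thesis using bm[OF assms(1,2) A1] A_un[OF assms(1,2) _ assms(3) _ _ assms(4,5)] by blast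
qed

lemma am_eq: assumes "b < dim_row B" "b' < dim_row B" "a < dim_row A" "S $$ (b,a) = 1" "R $$ (a,b') = 1"
  shows "am b b' = a"
proof -
  have B1: "B $$ (b,b') = 1" by (rule B_mid[OF assms])
  show ?thesis using am[OF assms(1,2) B1] B_un[OF assms(1,2) _ assms(3) _ _ assms(4,5)] by blast
qed

definition Phi where "Phi = restrict (\<lambda>x l. bm (x l) (x (l+1))) (shift_space A)"
definition Psi where "Psi y = (\<lambda>l. am (y (l-1)) (y l))"

lemma Phi_app: "x \<in> shift_space A \<Longrightarrow> Phi x = (\<lambda>l. bm (x l) (x (l+1)))"
  by (simp add: Phi_def)

lemma bmx: assumes x: "x \<in> shift_space A"
  shows "bm (x l) (x (l+1)) < dim_row B \<and> R $$ (x l, bm (x l) (x (l+1))) = 1 \<and> S $$ (bm (x l) (x (l+1)), x (l+1)) = 1"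
  using bm shift_allowed[OF x, of l] shift_allowed[OF x, of "l+1"] by blast

lemma amy: assumes y: "y \<in> shift_space B"
  shows "am (y (l-1)) (y l) < dim_row A \<and> S $$ (y (l-1), am (y (l-1)) (y l)) = 1 \<and> R $$ (am (y (l-1)) (y l), y l) = 1"
proof -
  have "y (l - 1) < dim_row B \<and> B $$ (y (l-1), y (l - 1 + 1)) = 1" by (rule shift_allowed[OF y])
  moreover have "y l < dim_row B" using shift_allowed[OF y, of l] by blast
  ultimately show ?thesis using am by simp
qed

lemma Phi_in: assumes x: "x \<in> shift_space A" shows "Phi x \<in> shift_space B"
  unfolding Phi_app[OF x] shift_space_def mem_Collect_eq
proof (intro conjI allI)
  fix l
  show "bm (x l) (x (l+1)) < dim_row B" using bmx[OF x] by blast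
  have "x (l+1) < dim_row A" using shift_allowed[OF x] by blast
  then show "B $$ (bm (x l) (x (l + 1)), bm (x (l + 1)) (x (l + 1 + 1))) = 1"
    using B_mid bmx[OF x, of l] bmx[OF x, of "l+1"] by blast
qed

lemma Psi_in: assumes y: "y \<in> shift_space B" shows "Psi y \<in> shift_space A"
  unfolding Psi_def shift_space_def mem_Collect_eq
proof (intro conjI allI)
  fix l
  show "am (y (l-1)) (y l) < dim_row A" using amy[OF y] by blast
  have yl: "y l < dim_row B" using shift_allowed[OF y] by blast
  have "S $$ (y l, am (y l) (y (l+1))) = 1 \<and> am (y l) (y (l+1)) < dim_row A"
    using amy[OF y, of "l+1"] by simp
  then show "A $$ (am (y (l - 1)) (y l), am (y (l + 1 - 1)) (y (l + 1))) = 1"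
    using A_mid amy[OF y, of l] yl by simp
qed

lemma Psi_Phi: assumes x: "x \<in> shift_space A" shows "Psi (Phi x) = x"
proof
  fix l
  have e: "Phi x (l-1) = bm (x (l-1)) (x l)" "Phi x l = bm (x l) (x (l+1))" using Phi_app[OF x] by simp_all
  have h1: "bm (x (l-1)) (x l) < dim_row B \<and> S $$ (bm (x (l-1)) (x l), x l) = 1"
    using bmx[OF x, of "l-1"] by simp
  have xl: "x l < dim_row A" using shift_allowed[OF x] by blast
  have "am (bm (x (l-1)) (x l)) (bm (x l) (x (l+1))) = x l"
    by (rule am_eq) (use h1 bmx[OF x, of l] xl in auto)
  then show "Psi (Phi x) l = x l" unfolding Psi_def e by simp
qed

lemma Phi_Psi: assumes y: "y \<in> shift_space B" shows "Phi (Psi y) = y"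
proof
  fix l
  have p: "Psi y \<in> shift_space A" by (rule Psi_in[OF y])
  have e: "Psi y l = am (y (l-1)) (y l)" "Psi y (l+1) = am (y l) (y (l+1))" by (simp_all add: Psi_def)
  have h1: "am (y l) (y (l+1)) < dim_row A \<and> S $$ (y l, am (y l) (y (l+1))) = 1"
    using amy[OF y, of "l+1"] by simp
  have yl: "y l < dim_row B" using shift_allowed[OF y] by blast
  have "bm (am (y (l-1)) (y l)) (am (y l) (y (l+1))) = y l"
    by (rule bm_eq) (use h1 amy[OF y, of l] yl in auto)
  then show "Phi (Psi y) l = y l" unfolding Phi_app[OF p] e by simp
qed

lemma Phi_cont: "continuous_on (shift_space A) Phi"
proof -
  have "continuous_on (shift_space A) (\<lambda>x l. bm (x (l + 0)) (x (l + 1)))" by (rule cont_block)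
  then have "continuous_on (shift_space A) (\<lambda>x l. bm (x l) (x (l + 1)))" by simp
  then show ?thesis by (rule continuous_on_eq) (simp add: Phi_app)
qed

lemma Psi_cont: "continuous_on (shift_space B) Psi"
proof -
  have "continuous_on (shift_space B) (\<lambda>x l. am (x (l + -1)) (x (l + 0)))" by (rule cont_block)
  then show ?thesis unfolding Psi_def[abs_def] by simp
qed

lemma homeo: "homeomorphism (shift_space A) (shift_space B) Phi Psi"
  unfolding homeomorphism_def
proof (intro conjI ballI Phi_cont Psi_cont)
  show "Phi ` shift_space A = shift_space B"
  proof
    show "Phi ` shift_space A \<subseteq> shift_space B" using Phi_in by blast
    show "shift_space B \<subseteq> Phi ` shift_space A"
    proof
      fix y assume y: "y \<in> shift_space B"
      have "y = Phi (Psi y)" using Phi_Psi[OF y] by simp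
      then show "y \<in> Phi ` shift_space A" using Psi_in[OF y] by blast
    qed
  qed
  show "Psi ` shift_space B = shift_space A"
  proof
    show "Psi ` shift_space B \<subseteq> shift_space A" using Psi_in by blast
    show "shift_space A \<subseteq> Psi ` shift_space B"
    proof
      fix x assume x: "x \<in> shift_space A"
      have "x = Psi (Phi x)" using Psi_Phi[OF x] by simp
      then show "x \<in> Psi ` shift_space B" using Phi_in[OF x] by blast
    qed
  qed
  show "\<And>x. x \<in> shift_space A \<Longrightarrow> Psi (Phi x) = x" by (rule Psi_Phi)
  show "\<And>y. y \<in> shift_space B \<Longrightarrow> Phi (Psi y) = y" by (rule Phi_Psi)
qed

lemma inv_eq: assumes y: "y \<in> shift_space B" shows "inv_conj A Phi y = Psi y"
proof -
  have inj: "inj_on Phi (shift_space A)" by (rule inj_on_inverseI[of _ Psi]) (rule Psi_Phi)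
  have "inv_conj A Phi y = inv_into (shift_space A) Phi (Phi (Psi y))" unfolding inv_conj_def Phi_Psi[OF y] ..
  also have "\<dots> = Psi y" by (rule inv_into_f_f[OF inj Psi_in[OF y]])
  finally show ?thesis .
qed

lemma Phi_elem: "elementary A B Phi"
  unfolding elementary_def conjugacy_def
proof (intro conjI)
  show "Phi \<in> extensional (shift_space A)" unfolding Phi_def by (rule restrict_extensional)
  show "\<exists>\<psi>. homeomorphism (shift_space A) (shift_space B) Phi \<psi>" using homeo by blast
  show "\<forall>x\<in>shift_space A. Phi (left_shift x) = left_shift (Phi x)"
  proof
    fix x assume x: "x \<in> shift_space A"
    have lx: "left_shift x \<in> shift_space A" by (rule left_shift_in[OF x])
    show "Phi (left_shift x) = left_shift (Phi x)"
      unfolding Phi_app[OF x] Phi_app[OF lx] by (simp add: left_shift_def)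
  qed
  show "\<exists>f. \<forall>x\<in>shift_space A. \<forall>i. Phi x i = f (x i) (x (i + 1))"
    by (rule exI[of _ bm]) (simp add: Phi_app)
  show "\<exists>g. \<forall>y\<in>shift_space B. \<forall>i. inv_conj A Phi y i = g (y (i - 1)) (y i)"
    by (rule exI[of _ am]) (simp add: inv_eq Psi_def)
qed

lemma Phi_elem_loc: "elem A B Phi"
  by (rule elem.intro[OF objA objB Phi_elem])

lemma R_of_Phi: "R_of A B Phi = R"
proof (rule eq_matI)
  interpret E: elem A B Phi by (rule Phi_elem_loc)
  show "dim_row (R_of A B Phi) = dim_row R" "dim_col (R_of A B Phi) = dim_col R" using Rc E.R_carrier by auto
  fix a b assume ab: "a < dim_row R" "b < dim_col R"
  then have a: "a < dim_row A" and b: "b < dim_row B" using Rc by auto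
  have lr: "loc_rule A Phi a a' = bm a a'" if h: "a' < dim_row A" "A $$ (a,a') = 1" for a'
  proof -
    obtain x where x: "x \<in> shift_space A" "x 0 = a" "x 1 = a'" using pair_occurs0[OF objA a h] by blast
    show ?thesis using E.loc[OF x(1), of 0] Phi_app[OF x(1)] x by simp
  qed
  have "(\<exists>a'<dim_row A. A $$ (a,a') = 1 \<and> loc_rule A Phi a a' = b) \<longleftrightarrow> R $$ (a,b) = 1"
  proof
    assume "\<exists>a'<dim_row A. A $$ (a,a') = 1 \<and> loc_rule A Phi a a' = b"
    then obtain a' where a': "a' < dim_row A" "A $$ (a,a') = 1" "loc_rule A Phi a a' = b" by blast
    show "R $$ (a,b) = 1" using bm[OF a a'(1,2)] lr[OF a'(1,2)] a'(3) by simp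
  next
    assume R1: "R $$ (a,b) = 1"
    obtain a' where a': "a' < dim_col S" "S $$ (b,a') \<noteq> 0" using nS b Sc unfolding nondeg_mat_def by auto
    have a'': "a' < dim_row A" using a' Sc by auto
    have "S $$ (b,a') \<in> {0,1}" by (rule zo_entry[OF zS]) (use b a' Sc in auto)
    then have S1: "S $$ (b,a') = 1" using a' by auto
    have A1: "A $$ (a,a') = 1" by (rule A_mid[OF a a'' b R1 S1])
    have "bm a a' = b" by (rule bm_eq[OF a a'' b R1 S1])
    then show "\<exists>a'<dim_row A. A $$ (a,a') = 1 \<and> loc_rule A Phi a a' = b"
      using lr[OF a'' A1] A1 a'' by auto
  qed
  moreover have "R $$ (a,b) \<in> {0,1}" by (rule zo_entry[OF zR]) (use ab in auto)
  ultimately show "R_of A B Phi $$ (a,b) = R $$ (a,b)" using a b by (auto simp: R_of_def)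
qed

lemma S_of_Phi: "S_of A B Phi = S"
proof (rule eq_matI)
  interpret E: elem A B Phi by (rule Phi_elem_loc)
  show "dim_row (S_of A B Phi) = dim_row S" "dim_col (S_of A B Phi) = dim_col S" using Sc E.S_carrier by auto
  fix b a assume ba: "b < dim_row S" "a < dim_col S"
  then have b: "b < dim_row B" and a: "a < dim_row A" using Sc by auto
  have lr: "inv_loc_rule A B Phi b b' = am b b'" if h: "b' < dim_row B" "B $$ (b,b') = 1" for b'
  proof -
    obtain y where y: "y \<in> shift_space B" "y 0 = b" "y 1 = b'" using pair_occurs0[OF objB b h] by blast
    show ?thesis using E.iloc[OF y(1), of 1] inv_eq[OF y(1)] y by (simp add: Psi_def)
  qed
  have "(\<exists>b'<dim_row B. B $$ (b,b') = 1 \<and> inv_loc_rule A B Phi b b' = a) \<longleftrightarrow> S $$ (b,a) = 1"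
  proof
    assume "\<exists>b'<dim_row B. B $$ (b,b') = 1 \<and> inv_loc_rule A B Phi b b' = a"
    then obtain b' where b': "b' < dim_row B" "B $$ (b,b') = 1" "inv_loc_rule A B Phi b b' = a" by blast
    show "S $$ (b,a) = 1" using am[OF b b'(1,2)] lr[OF b'(1,2)] b'(3) by simp
  next
    assume S1: "S $$ (b,a) = 1"
    obtain b' where b': "b' < dim_col R" "R $$ (a,b') \<noteq> 0" using nR a Rc unfolding nondeg_mat_def by auto
    have b'': "b' < dim_row B" using b' Rc by auto
    have "R $$ (a,b') \<in> {0,1}" by (rule zo_entry[OF zR]) (use a b' Rc in auto)
    then have R1: "R $$ (a,b') = 1" using b' by auto
    have B1: "B $$ (b,b') = 1" by (rule B_mid[OF b b'' a S1 R1])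
    have "am b b' = a" by (rule am_eq[OF b b'' a S1 R1])
    then show "\<exists>b'<dim_row B. B $$ (b,b') = 1 \<and> inv_loc_rule A B Phi b b' = a"
      using lr[OF b'' B1] B1 b'' by auto
  qed
  moreover have "S $$ (b,a) \<in> {0,1}" by (rule zo_entry[OF zS]) (use ba in auto)
  ultimately show "S_of A B Phi $$ (b,a) = S $$ (b,a)" using a b by (auto simp: S_of_def)
qed

end




lemma (in elem) elem_all:
  "R_of A B \<phi> \<in> carrier_mat (dim_row A) (dim_row B) \<and> S_of A B \<phi> \<in> carrier_mat (dim_row B) (dim_row A)
   \<and> zero_one_mat (R_of A B \<phi>) \<and> zero_one_mat (S_of A B \<phi>)
   \<and> nondeg_mat (R_of A B \<phi>) \<and> nondeg_mat (S_of A B \<phi>)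
   \<and> A = R_of A B \<phi> * S_of A B \<phi> \<and> B = S_of A B \<phi> * R_of A B \<phi>"
  using R_carrier S_carrier R_01 S_01 R_nondeg S_nondeg A_eq B_eq by blast

lemma (in comp3) comp_all:
  "R_of A B \<phi> * R_of B C \<kappa> = R_of A C \<theta> \<and> R_of B C \<kappa> * S_of A C \<theta> = S_of A B \<phi>
   \<and> S_of A C \<theta> * R_of A B \<phi> = S_of B C \<kappa>"
  using R_comp S_comp1 S_comp2 by blast

lemma sse_comp:
  assumes P1: "sse_pair A B R1 S1" and P2: "sse_pair B C R2 S2" and P3: "sse_pair A C R3 S3"
    and r: "R1 * R2 = R3" and s1: "R2 * S3 = S1" and s2: "S3 * R1 = S2"
  shows "compose (shift_space A) (sse_pair.Phi B C R2 S2) (sse_pair.Phi A B R1 S1) = sse_pair.Phi A C R3 S3"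
proof
  interpret P1: sse_pair A B R1 S1 by (rule P1)
  interpret P2: sse_pair B C R2 S2 by (rule P2)
  interpret P3: sse_pair A C R3 S3 by (rule P3)
  fix x
  show "compose (shift_space A) P2.Phi P1.Phi x = P3.Phi x"
  proof (cases "x \<in> shift_space A")
    case False then show ?thesis by (simp add: compose_def P3.Phi_def)
  next
    case True
    have y: "P1.Phi x \<in> shift_space B" by (rule P1.Phi_in[OF True])
    have "P2.Phi (P1.Phi x) = P3.Phi x"
    proof
      fix l
      define b where "b = P1.bm (x l) (x (l+1))"
      define b' where "b' = P1.bm (x (l+1)) (x (l+1+1))"
      define c where "c = P2.bm b b'"
      have "P2.Phi (P1.Phi x) l = P2.bm (P1.Phi x l) (P1.Phi x (l+1))" using P2.Phi_app[OF y] by simp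
      then have e1: "P2.Phi (P1.Phi x) l = c" using P1.Phi_app[OF True] c_def b_def b'_def by simp
      have e3: "P3.Phi x l = P3.bm (x l) (x (l+1))" by (simp add: P3.Phi_app[OF True])
      have hb: "b < dim_row B \<and> R1 $$ (x l, b) = 1 \<and> S1 $$ (b, x (l+1)) = 1"
        using P1.bmx[OF True, of l] b_def by simp
      have hb': "b' < dim_row B \<and> R1 $$ (x (l+1), b') = 1 \<and> S1 $$ (b', x (l+1+1)) = 1"
        using P1.bmx[OF True, of "l+1"] b'_def by simp
      have Bbb': "B $$ (b,b') = 1" using shift_allowed[OF y, of l] P1.Phi_app[OF True] b_def b'_def by simp
      have hc: "c < dim_row C \<and> R2 $$ (b,c) = 1 \<and> S2 $$ (c,b') = 1"
        using P2.bm[of b b'] hb hb' Bbb' c_def by simp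
      have xl: "x l < dim_row A" "x (l+1) < dim_row A" using shift_allowed[OF True] by blast+
      have R3c: "R3 $$ (x l, c) = 1"
        using mat01_prod_props(1)[OF P1.Rc P2.Rc P1.zR P2.zR P3.zR r[symmetric] xl(1), of c b] hb hc by blast
      obtain a where a: "a < dim_row A" "S3 $$ (c,a) = 1" "R1 $$ (a,b') = 1"
        using mat01_prod_props(2)[OF P3.Sc P1.Rc P3.zS P1.zR P2.zS s2[symmetric], of c b'] hb' hc by blast
      have "S1 $$ (b,a) = 1"
        using mat01_prod_props(1)[OF P2.Rc P3.Sc P2.zR P3.zS P1.zS s1[symmetric], of b a c] hb hc a by blast
      then have "a = x (l+1)" using P1.B_un[of b b' a "x (l+1)"] hb hb' a xl by blast
      then have S3c: "S3 $$ (c, x (l+1)) = 1" using a by simp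
      have "P3.bm (x l) (x (l+1)) = c" by (rule P3.bm_eq[OF xl(1) xl(2) _ R3c S3c]) (use hc in blast)
      then show "P2.Phi (P1.Phi x) l = P3.Phi x l" using e1 e3 by simp
    qed
    then show ?thesis using True by (simp add: compose_def)
  qed
qed

lemma elem_unique:
  assumes E1: "elem A B \<phi>" and E2: "elem A B \<phi>'" and R: "R_of A B \<phi> = R_of A B \<phi>'"
    and S: "S_of A B \<phi> = S_of A B \<phi>'"
  shows "\<phi> = \<phi>'"
proof
  interpret E1: elem A B \<phi> by (rule E1)
  interpret E2: elem A B \<phi>' by (rule E2)
  fix x
  show "\<phi> x = \<phi>' x"
  proof (cases "x \<in> shift_space A")
    case False
    have "\<phi> x = undefined" by (rule extensional_arb[OF E1.ext False])
    moreover have "\<phi>' x = undefined" by (rule extensional_arb[OF E2.ext False])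
    ultimately show ?thesis by simp
  next
    case True
    show ?thesis
    proof
      fix l
      define b where "b = \<phi>' x l"
      have r2: "E2.Rp (x l) b" using E2.Rp_pt[OF True, of l] b_def by simp
      have "E2.Sp (\<phi>' x l) (inv_conj A \<phi>' (\<phi>' x) (l+1))" by (rule E2.Sp_pt[OF E2.phi_in[OF True]])
      then have s2: "E2.Sp b (x (l+1))" using E2.psi_phi[OF True] b_def by simp
      have xl: "x l < dim_row A" "x (l+1) < dim_row A" using shift_allowed[OF True] by blast+
      have bb: "b < dim_row B" using E2.Rp_bound[OF r2] by blast
      have "R_of A B \<phi> $$ (x l, b) = 1" using R E2.R_one[OF xl(1) bb] r2 by simp
      then have r1: "E1.Rp (x l) b" using E1.R_one[OF xl(1) bb] by simp
      have "S_of A B \<phi> $$ (b, x (l+1)) = 1" using S E2.S_one[OF bb xl(2)] s2 by simp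
      then have s1: "E1.Sp b (x (l+1))" using E1.S_one[OF bb xl(2)] by simp
      obtain u where u: "u \<in> shift_space A" "u 0 = x l" "u 1 = x (l+1)" "\<phi> u 0 = b"
        using E1.K[OF r1 s1] by blast
      have "\<phi> u 0 = loc_rule A \<phi> (x l) (x (l+1))" using E1.loc[OF u(1), of 0] u by simp
      moreover have "\<phi> x l = loc_rule A \<phi> (x l) (x (l+1))" by (rule E1.loc[OF True])
      ultimately show "\<phi> x l = \<phi>' x l" using u b_def by simp
    qed
  qed
qed

lemma id_pair: assumes A: "obj_mat A" shows "sse_pair A A (1\<^sub>m (dim_row A)) A"
proof -
  have Ac: "A \<in> carrier_mat (dim_row A) (dim_row A)" using A unfolding obj_mat_def carrier_mat_def by simp
  have zA: "zero_one_mat A" and nA: "nondeg_mat A" using A unfolding obj_mat_def by simp_all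
  have z1: "zero_one_mat (1\<^sub>m (dim_row A))" unfolding zero_one_mat_def by simp
  have n1: "nondeg_mat (1\<^sub>m (dim_row A))" unfolding nondeg_mat_def by force
  show ?thesis
  proof (rule sse_pair.intro[OF A A one_carrier_mat Ac z1 zA n1 nA])
    show "A = 1\<^sub>m (dim_row A) * A" using left_mult_one_mat[OF Ac] by simp
    show "A = A * 1\<^sub>m (dim_row A)" using right_mult_one_mat[OF Ac] by simp
  qed
qed

lemma id_Phi: assumes A: "obj_mat A"
  shows "sse_pair.Phi A A (1\<^sub>m (dim_row A)) A = restrict id (shift_space A)"
proof
  interpret P: sse_pair A A "1\<^sub>m (dim_row A)" A by (rule id_pair[OF A])
  fix x
  show "P.Phi x = restrict id (shift_space A) x"
  proof (cases "x \<in> shift_space A")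
    case False then show ?thesis by (simp add: P.Phi_def)
  next
    case True
    have "P.bm (x l) (x (l+1)) = x l" for l
    proof (rule P.bm_eq)
      show "x l < dim_row A" "x (l+1) < dim_row A" "x l < dim_row A" using shift_allowed[OF True] by blast+
      then show "1\<^sub>m (dim_row A) $$ (x l, x l) = 1" by simp
      show "A $$ (x l, x (l+1)) = 1" using shift_allowed[OF True] by blast
    qed
    then show ?thesis using True by (simp add: P.Phi_app)
  qed
qed

lemma part1: "\<forall>n Bs \<Phi>. nerve_simplex n Bs \<Phi> \<longrightarrow>
        sse_simplex n Bs (\<lambda>i j. R_of (Bs ! i) (Bs ! j) (\<Phi> i j)) (\<lambda>i j. S_of (Bs ! i) (Bs ! j) (\<Phi> i j))"
proof (intro allI impI)
  fix n Bs \<Phi> assume ns: "nerve_simplex n Bs \<Phi>"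
  have len: "length Bs = Suc n" and ob: "\<And>i. i \<le> n \<Longrightarrow> obj_mat (Bs!i)"
    and el: "\<And>i j. i < j \<Longrightarrow> j \<le> n \<Longrightarrow> elementary (Bs!i) (Bs!j) (\<Phi> i j)"
    and cp: "\<And>i j k. i < j \<Longrightarrow> j < k \<Longrightarrow> k \<le> n \<Longrightarrow>
        compose (shift_space (Bs!i)) (\<Phi> j k) (\<Phi> i j) = \<Phi> i k"
    using ns unfolding nerve_simplex_def by auto
  have E: "elem (Bs!i) (Bs!j) (\<Phi> i j)" if "i < j" "j \<le> n" for i j
    by (rule elem.intro) (use ob el that in auto)
  have C: "comp3 (Bs!i) (Bs!j) (Bs!k) (\<Phi> i j) (\<Phi> j k) (\<Phi> i k)" if h: "i < j" "j < k" "k \<le> n" for i j k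
  proof -
    have ax: "\<Phi> i k x = \<Phi> j k (\<Phi> i j x)" if x: "x \<in> shift_space (Bs!i)" for x
    proof -
      have "\<Phi> i k x = compose (shift_space (Bs!i)) (\<Phi> j k) (\<Phi> i j) x" using cp[OF h] by simp
      also have "\<dots> = \<Phi> j k (\<Phi> i j x)" by (rule compose_eq[OF x])
      finally show ?thesis .
    qed
    have e1: "elem (Bs!i) (Bs!j) (\<Phi> i j)" using E h by simp
    have e2: "elem (Bs!j) (Bs!k) (\<Phi> j k)" using E h by simp
    have e3: "elem (Bs!i) (Bs!k) (\<Phi> i k)" using E h by simp
    show ?thesis unfolding comp3_def comp3_axioms_def using e1 e2 e3 ax by blast
  qed
  have A1: "\<forall>i j. i < j \<and> j \<le> n \<longrightarrow> R_of (Bs ! i) (Bs ! j) (\<Phi> i j) \<in> carrier_mat (dim_row (Bs ! i)) (dim_row (Bs ! j)) \<and>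
      S_of (Bs ! i) (Bs ! j) (\<Phi> i j) \<in> carrier_mat (dim_row (Bs ! j)) (dim_row (Bs ! i)) \<and>
      zero_one_mat (R_of (Bs ! i) (Bs ! j) (\<Phi> i j)) \<and> zero_one_mat (S_of (Bs ! i) (Bs ! j) (\<Phi> i j)) \<and>
      nondeg_mat (R_of (Bs ! i) (Bs ! j) (\<Phi> i j)) \<and> nondeg_mat (S_of (Bs ! i) (Bs ! j) (\<Phi> i j)) \<and>
      Bs ! i = R_of (Bs ! i) (Bs ! j) (\<Phi> i j) * S_of (Bs ! i) (Bs ! j) (\<Phi> i j) \<and>
      Bs ! j = S_of (Bs ! i) (Bs ! j) (\<Phi> i j) * R_of (Bs ! i) (Bs ! j) (\<Phi> i j)"
    using elem.elem_all[OF E] by blast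
  have A2: "\<forall>i j k. i < j \<and> j < k \<and> k \<le> n \<longrightarrow> R_of (Bs ! i) (Bs ! j) (\<Phi> i j) * R_of (Bs ! j) (Bs ! k) (\<Phi> j k) = R_of (Bs ! i) (Bs ! k) (\<Phi> i k) \<and>
      R_of (Bs ! j) (Bs ! k) (\<Phi> j k) * S_of (Bs ! i) (Bs ! k) (\<Phi> i k) = S_of (Bs ! i) (Bs ! j) (\<Phi> i j) \<and>
      S_of (Bs ! i) (Bs ! k) (\<Phi> i k) * R_of (Bs ! i) (Bs ! j) (\<Phi> i j) = S_of (Bs ! j) (Bs ! k) (\<Phi> j k)"
    using comp3.comp_all[OF C] by blast
  have A0: "\<forall>i\<le>n. obj_mat (Bs ! i)" using ob by blast
  show "sse_simplex n Bs (\<lambda>i j. R_of (Bs ! i) (Bs ! j) (\<Phi> i j)) (\<lambda>i j. S_of (Bs ! i) (Bs ! j) (\<Phi> i j))"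
    unfolding sse_simplex_def using len A0 A1 A2 by (intro conjI)
qed

lemma part2: "\<forall>n Bs R S. sse_simplex n Bs R S \<longrightarrow>
        (\<exists>\<Phi>. nerve_simplex n Bs \<Phi> \<and>
           (\<forall>i j. i < j \<and> j \<le> n \<longrightarrow>
              R_of (Bs ! i) (Bs ! j) (\<Phi> i j) = R i j \<and> S_of (Bs ! i) (Bs ! j) (\<Phi> i j) = S i j))"
proof (intro allI impI)
  fix n Bs R S assume ss: "sse_simplex n Bs R S"
  have len: "length Bs = Suc n" and ob: "\<And>i. i \<le> n \<Longrightarrow> obj_mat (Bs!i)"
    and pr: "\<And>i j. i < j \<Longrightarrow> j \<le> n \<Longrightarrow>
          R i j \<in> carrier_mat (dim_row (Bs ! i)) (dim_row (Bs ! j))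
        \<and> S i j \<in> carrier_mat (dim_row (Bs ! j)) (dim_row (Bs ! i))
        \<and> zero_one_mat (R i j) \<and> zero_one_mat (S i j)
        \<and> nondeg_mat (R i j) \<and> nondeg_mat (S i j)
        \<and> Bs ! i = R i j * S i j \<and> Bs ! j = S i j * R i j"
    using ss unfolding sse_simplex_def by (blast)+
  have cm: "\<And>i j k. i < j \<Longrightarrow> j < k \<Longrightarrow> k \<le> n \<Longrightarrow>
          R i j * R j k = R i k \<and> R j k * S i k = S i j \<and> S i k * R i j = S j k"
    using ss unfolding sse_simplex_def by auto
  have P: "sse_pair (Bs!i) (Bs!j) (R i j) (S i j)" if h: "i < j" "j \<le> n" for i j
  proof -
    have o: "obj_mat (Bs!i)" "obj_mat (Bs!j)" using ob h by auto
    show ?thesis by (rule sse_pair.intro[OF o]) (use pr[OF h] in blast)+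
  qed
  define \<Phi> where "\<Phi> i j = sse_pair.Phi (Bs!i) (Bs!j) (R i j) (S i j)" for i j
  show "\<exists>\<Phi>. nerve_simplex n Bs \<Phi> \<and>
           (\<forall>i j. i < j \<and> j \<le> n \<longrightarrow>
              R_of (Bs ! i) (Bs ! j) (\<Phi> i j) = R i j \<and> S_of (Bs ! i) (Bs ! j) (\<Phi> i j) = S i j)"
  proof (rule exI[of _ \<Phi>], intro conjI)
    show "nerve_simplex n Bs \<Phi>"
      unfolding nerve_simplex_def
    proof (intro conjI allI impI)
      show "length Bs = Suc n" by (rule len)
    next
      fix i assume "i \<le> n" then show "obj_mat (Bs!i)" by (rule ob)
    next
      fix i j assume "i < j \<and> j \<le> n"
      then show "elementary (Bs ! i) (Bs ! j) (\<Phi> i j)" unfolding \<Phi>_def using sse_pair.Phi_elem[OF P] by blast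
    next
      fix i j k assume h: "i < j \<and> j < k \<and> k \<le> n"
      have p1: "sse_pair (Bs!i) (Bs!j) (R i j) (S i j)" using P h by simp
      have p2: "sse_pair (Bs!j) (Bs!k) (R j k) (S j k)" using P h by simp
      have p3: "sse_pair (Bs!i) (Bs!k) (R i k) (S i k)" using P h by simp
      have c: "R i j * R j k = R i k" "R j k * S i k = S i j" "S i k * R i j = S j k" using cm h by auto
      show "compose (shift_space (Bs ! i)) (\<Phi> j k) (\<Phi> i j) = \<Phi> i k"
        unfolding \<Phi>_def by (rule sse_comp[OF p1 p2 p3 c])
    qed
    show "\<forall>i j. i < j \<and> j \<le> n \<longrightarrow>
              R_of (Bs ! i) (Bs ! j) (\<Phi> i j) = R i j \<and> S_of (Bs ! i) (Bs ! j) (\<Phi> i j) = S i j"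
      unfolding \<Phi>_def using sse_pair.R_of_Phi[OF P] sse_pair.S_of_Phi[OF P] by blast
  qed
qed

lemma part3: "\<forall>n Bs \<Phi> \<Psi>. nerve_simplex n Bs \<Phi> \<and> nerve_simplex n Bs \<Psi> \<and>
        (\<forall>i j. i < j \<and> j \<le> n \<longrightarrow>
           R_of (Bs ! i) (Bs ! j) (\<Phi> i j) = R_of (Bs ! i) (Bs ! j) (\<Psi> i j)
         \<and> S_of (Bs ! i) (Bs ! j) (\<Phi> i j) = S_of (Bs ! i) (Bs ! j) (\<Psi> i j))
        \<longrightarrow> (\<forall>i j. i < j \<and> j \<le> n \<longrightarrow> \<Phi> i j = \<Psi> i j)"
proof (intro allI impI)
  fix n Bs \<Phi> \<Psi> i j
  assume h: "nerve_simplex n Bs \<Phi> \<and> nerve_simplex n Bs \<Psi> \<and>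
        (\<forall>i j. i < j \<and> j \<le> n \<longrightarrow>
           R_of (Bs ! i) (Bs ! j) (\<Phi> i j) = R_of (Bs ! i) (Bs ! j) (\<Psi> i j)
         \<and> S_of (Bs ! i) (Bs ! j) (\<Phi> i j) = S_of (Bs ! i) (Bs ! j) (\<Psi> i j))"
    and ij: "i < j \<and> j \<le> n"
  have o: "obj_mat (Bs!i)" "obj_mat (Bs!j)" using h ij unfolding nerve_simplex_def by auto
  have e1: "elem (Bs!i) (Bs!j) (\<Phi> i j)"
    by (rule elem.intro[OF o]) (use h ij in \<open>auto simp: nerve_simplex_def\<close>)
  have e2: "elem (Bs!i) (Bs!j) (\<Psi> i j)"
    by (rule elem.intro[OF o]) (use h ij in \<open>auto simp: nerve_simplex_def\<close>)
  have rs: "R_of (Bs ! i) (Bs ! j) (\<Phi> i j) = R_of (Bs ! i) (Bs ! j) (\<Psi> i j)"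
       "S_of (Bs ! i) (Bs ! j) (\<Phi> i j) = S_of (Bs ! i) (Bs ! j) (\<Psi> i j)" using h ij by auto
  show "\<Phi> i j = \<Psi> i j" by (rule elem_unique[OF e1 e2 rs])
qed

lemma part4: "\<forall>A. obj_mat A \<longrightarrow>
        elementary A A (restrict id (shift_space A))
      \<and> R_of A A (restrict id (shift_space A)) = 1\<^sub>m (dim_row A)
      \<and> S_of A A (restrict id (shift_space A)) = A"
proof (intro allI impI)
  fix A assume A: "obj_mat A"
  have P: "sse_pair A A (1\<^sub>m (dim_row A)) A" by (rule id_pair[OF A])
  show "elementary A A (restrict id (shift_space A))
      \<and> R_of A A (restrict id (shift_space A)) = 1\<^sub>m (dim_row A)
      \<and> S_of A A (restrict id (shift_space A)) = A"
    using sse_pair.Phi_elem[OF P] sse_pair.R_of_Phi[OF P] sse_pair.S_of_Phi[OF P] id_Phi[OF A] by simp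
qed


theorem mainTheorem12:
  shows
    \<comment> \<open>the map X_A |-> A, phi |-> (R_phi, S_phi) sends n-simplices to n-simplices\<close>
    "(\<forall>n Bs \<Phi>. nerve_simplex n Bs \<Phi> \<longrightarrow>
        sse_simplex n Bs (\<lambda>i j. R_of (Bs ! i) (Bs ! j) (\<Phi> i j)) (\<lambda>i j. S_of (Bs ! i) (Bs ! j) (\<Phi> i j)))
   \<comment> \<open>surjective in every degree\<close>
   \<and> (\<forall>n Bs R S. sse_simplex n Bs R S \<longrightarrow>
        (\<exists>\<Phi>. nerve_simplex n Bs \<Phi> \<and>
           (\<forall>i j. i < j \<and> j \<le> n \<longrightarrow>
              R_of (Bs ! i) (Bs ! j) (\<Phi> i j) = R i j \<and> S_of (Bs ! i) (Bs ! j) (\<Phi> i j) = S i j)))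
   \<comment> \<open>injective in every degree\<close>
   \<and> (\<forall>n Bs \<Phi> \<Psi>. nerve_simplex n Bs \<Phi> \<and> nerve_simplex n Bs \<Psi> \<and>
        (\<forall>i j. i < j \<and> j \<le> n \<longrightarrow>
           R_of (Bs ! i) (Bs ! j) (\<Phi> i j) = R_of (Bs ! i) (Bs ! j) (\<Psi> i j)
         \<and> S_of (Bs ! i) (Bs ! j) (\<Phi> i j) = S_of (Bs ! i) (Bs ! j) (\<Psi> i j))
        \<longrightarrow> (\<forall>i j. i < j \<and> j \<le> n \<longrightarrow> \<Phi> i j = \<Psi> i j))
   \<comment> \<open>compatibility with degeneracies: identities are elementary and go to (I, A)\<close>
   \<and> (\<forall>A. obj_mat A \<longrightarrow>
        elementary A A (restrict id (shift_space A))
      \<and> R_of A A (restrict id (shift_space A)) = 1\<^sub>m (dim_row A)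
      \<and> S_of A A (restrict id (shift_space A)) = A)"
  by (intro conjI part1 part2 part3 part4)

end
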